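(* Let $\omega$ be a primitive third root of unity and let $S=\mathbb{C}\langle x,y,z\rangle/(x^2,y^2,z^2)$, graded by $\deg x=\deg y=\deg z=1$. For $t\in\mathbb{C}^*$ (i.e. $t\neq 0,\infty$), let $T_t$ be the quotient of $S$ by the two-sided ideal generated by $$v_1=(zxy+\omega xyz+\omega^2 yzx)+t\,(yxz+\omega zyx+\omega^2 xzy),\qquad v_2=(zxy+\omega^2 xyz+\omega yzx)+t\,(yxz+\omega^2 zyx+\omega xzy).$$ Then $T_t$ has Hilbert series $H_{T_t}(s)=\sum_{k\ge 0}\dim (T_t)_k\, s^k=\frac{1}{(1-s)^3}$.
   Context: The Hilbert series of a connected positively graded algebra $A$ is $H_A(s)=\sum_k \dim A_k s^k$. *)

theory Defs
  imports "HOL-Analysis.Analysis" "HOL-Library.Function_Algebras"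
    "HOL-Computational_Algebra.Formal_Power_Series"
begin

text \<open>Noncommutative polynomials in the letters x = 0, y = 1, z = 2 over the complex
numbers are represented as coefficient functions on words (nat lists); addition,
zero and negation are pointwise (Function_Algebras).\<close>

type_synonym ncp = "nat list \<Rightarrow> complex"

definition nc_scale :: "complex \<Rightarrow> ncp \<Rightarrow> ncp" where
  "nc_scale c f = (\<lambda>w. c * f w)"

definition nc_mult :: "ncp \<Rightarrow> ncp \<Rightarrow> ncp" where
  "nc_mult f g = (\<lambda>w. \<Sum>i\<le>length w. f (take i w) * g (drop i w))"

definition nc_mon :: "nat list \<Rightarrow> ncp" where
  "nc_mon u = (\<lambda>w. if w = u then 1 else 0)"

definition ncpoly :: "ncp set" where
  "ncpoly = {f. finite {w. f w \<noteq> 0} \<and> (\<forall>w. f w \<noteq> 0 \<longrightarrow> set w \<subseteq> {0,1,2})}"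

definition ncpoly_deg :: "nat \<Rightarrow> ncp set" where
  "ncpoly_deg k = {f \<in> ncpoly. \<forall>w. f w \<noteq> 0 \<longrightarrow> length w = k}"

definition nc_ideal :: "ncp set \<Rightarrow> ncp set" where
  "nc_ideal G = module.span nc_scale
     {nc_mult (nc_mult a g) b | a g b. a \<in> ncpoly \<and> g \<in> G \<and> b \<in> ncpoly}"

definition quot_dim :: "ncp set \<Rightarrow> nat \<Rightarrow> nat" where
  "quot_dim G k = vector_space.dim nc_scale (ncpoly_deg k)
                 - vector_space.dim nc_scale (nc_ideal G \<inter> ncpoly_deg k)"

definition hilbert_series :: "ncp set \<Rightarrow> complex fps" where
  "hilbert_series G = Abs_fps (\<lambda>k. of_nat (quot_dim G k))"

abbreviation X :: ncp where "X \<equiv> nc_mon [0]"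
abbreviation Y :: ncp where "Y \<equiv> nc_mon [1]"
abbreviation Z :: ncp where "Z \<equiv> nc_mon [2]"

definition nc_prod3 :: "ncp \<Rightarrow> ncp \<Rightarrow> ncp \<Rightarrow> ncp" where
  "nc_prod3 a b c = nc_mult (nc_mult a b) c"

definition v1 :: "complex \<Rightarrow> complex \<Rightarrow> ncp" where
  "v1 \<omega> t =
     (nc_prod3 Z X Y + nc_scale \<omega> (nc_prod3 X Y Z) + nc_scale (\<omega>^2) (nc_prod3 Y Z X))
     + nc_scale t (nc_prod3 Y X Z + nc_scale \<omega> (nc_prod3 Z Y X) + nc_scale (\<omega>^2) (nc_prod3 X Z Y))"

definition v2 :: "complex \<Rightarrow> complex \<Rightarrow> ncp" where
  "v2 \<omega> t =
     (nc_prod3 Z X Y + nc_scale (\<omega>^2) (nc_prod3 X Y Z) + nc_scale \<omega> (nc_prod3 Y Z X))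
     + nc_scale t (nc_prod3 Y X Z + nc_scale (\<omega>^2) (nc_prod3 Z Y X) + nc_scale \<omega> (nc_prod3 X Z Y))"

definition T_rels :: "complex \<Rightarrow> complex \<Rightarrow> ncp set" where
  "T_rels \<omega> t = {nc_mult X X, nc_mult Y Y, nc_mult Z Z, v1 \<omega> t, v2 \<omega> t}"

end

theory Submission
  imports Defs
begin


notation nc_mult (infixl "\<odot>" 70)
notation nc_scale (infixr "*:" 75)

lemma sum_apply_fun: "(sum f A) x = (\<Sum>a\<in>A. f a x)"
  by (induction A rule: infinite_finite_induct) auto

lemma nc_mult_add_left: "(f + g) \<odot> h = f \<odot> h + g \<odot> h"
  by (simp add: nc_mult_def fun_eq_iff algebra_simps sum.distrib)
lemma nc_mult_add_right: "h \<odot> (f + g) = h \<odot> f + h \<odot> g"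
  by (simp add: nc_mult_def fun_eq_iff algebra_simps sum.distrib)
lemma nc_mult_diff_left: "(f - g) \<odot> h = f \<odot> h - g \<odot> h"
  by (simp add: nc_mult_def fun_eq_iff algebra_simps sum_subtractf)
lemma nc_mult_diff_right: "h \<odot> (f - g) = h \<odot> f - h \<odot> g"
  by (simp add: nc_mult_def fun_eq_iff algebra_simps sum_subtractf)
lemma nc_mult_scale_left: "(c *: f) \<odot> h = c *: (f \<odot> h)"
  by (simp add: nc_mult_def nc_scale_def fun_eq_iff sum_distrib_left mult.assoc)
lemma nc_mult_scale_right: "h \<odot> (c *: f) = c *: (h \<odot> f)"
  by (simp add: nc_mult_def nc_scale_def fun_eq_iff sum_distrib_left algebra_simps)
lemma nc_mult_zero_left: "0 \<odot> h = 0"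
  by (simp add: nc_mult_def fun_eq_iff)
lemma nc_mult_zero_right: "h \<odot> 0 = 0"
  by (simp add: nc_mult_def fun_eq_iff)
lemma nc_mult_uminus_left: "(- f) \<odot> h = - (f \<odot> h)"
  by (simp add: nc_mult_def fun_eq_iff sum_negf)
lemma nc_mult_uminus_right: "h \<odot> (- f) = - (h \<odot> f)"
  by (simp add: nc_mult_def fun_eq_iff sum_negf)

lemma nc_scale_add: "c *: (f + g) = c *: f + c *: g"
  by (simp add: nc_scale_def fun_eq_iff algebra_simps)
lemma nc_scale_diff: "c *: (f - g) = c *: f - c *: g"
  by (simp add: nc_scale_def fun_eq_iff algebra_simps)
lemma nc_scale_scale: "c *: (d *: f) = (c * d) *: f"
  by (simp add: nc_scale_def fun_eq_iff algebra_simps)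
lemma nc_scale_one: "1 *: f = f"
  by (simp add: nc_scale_def fun_eq_iff)
lemma nc_scale_zero: "c *: 0 = 0" "0 *: f = 0"
  by (simp_all add: nc_scale_def fun_eq_iff)
lemma nc_scale_add_left: "(c + d) *: f = c *: f + d *: f"
  by (simp add: nc_scale_def fun_eq_iff algebra_simps)

interpretation ncv: vector_space nc_scale
  by unfold_locales (simp_all add: nc_scale_def fun_eq_iff algebra_simps)

lemma nc_mon_one_left: "nc_mon [] \<odot> f = f"
proof -
  have "(nc_mon [] \<odot> f) w = f w" for w
  proof -
    have "(nc_mon [] \<odot> f) w = (\<Sum>i\<le>length w. (if i = 0 then f w else 0))"
      unfolding nc_mult_def nc_mon_def
      by (intro sum.cong) auto
    also have "\<dots> = f w" by (simp add: sum.delta)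
    finally show ?thesis .
  qed
  then show ?thesis by auto
qed

lemma nc_mon_one_right: "f \<odot> nc_mon [] = f"
proof -
  have "(f \<odot> nc_mon []) w = f w" for w
  proof -
    have "(f \<odot> nc_mon []) w = (\<Sum>i\<le>length w. (if i = length w then f w else 0))"
      unfolding nc_mult_def nc_mon_def
      by (intro sum.cong) auto
    also have "\<dots> = f w" by (simp add: sum.delta)
    finally show ?thesis .
  qed
  then show ?thesis by auto
qed

lemma nc_mon_mult: "nc_mon u \<odot> nc_mon v = nc_mon (u @ v)"
proof -
  have "(nc_mon u \<odot> nc_mon v) w = nc_mon (u @ v) w" for w
  proof -
    have eq: "(take i w = u \<and> drop i w = v) \<longleftrightarrow> (i = length u \<and> w = u @ v)" if "i \<le> length w" for i
    proof
      assume "take i w = u \<and> drop i w = v"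
      then show "i = length u \<and> w = u @ v" using that
        by (metis append_take_drop_id length_take min_absorb2)
    qed auto
    have "(nc_mon u \<odot> nc_mon v) w = (\<Sum>i\<le>length w. (if i = length u then (if w = u @ v then 1 else 0) else 0))"
      unfolding nc_mult_def nc_mon_def
    proof (intro sum.cong refl)
      fix i assume "i \<in> {..length w}"
      then have "i \<le> length w" by simp
      show "(if take i w = u then 1 else 0) * (if drop i w = v then 1 else 0) =
        (if i = length u then (if w = u @ v then 1 else 0) else (0::complex))"
      proof -
        have e: "(take i w = u \<and> drop i w = v) = (i = length u \<and> w = u @ v)"
          using eq[OF \<open>i \<le> length w\<close>] .
        have "(if take i w = u then 1 else 0) * (if drop i w = v then 1 else 0) =
          (if take i w = u \<and> drop i w = v then 1 else (0::complex))" by simp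
        also have "\<dots> = (if i = length u \<and> w = u @ v then 1 else 0)" by (simp only: e)
        also have "\<dots> = (if i = length u then (if w = u @ v then 1 else 0) else (0::complex))" by simp
        finally show ?thesis .
      qed
    qed
    also have "\<dots> = nc_mon (u @ v) w" by (auto simp: sum.delta nc_mon_def)
    finally show ?thesis .
  qed
  then show ?thesis by auto
qed

lemma nc_mult_assoc: "(f \<odot> g) \<odot> h = f \<odot> (g \<odot> h)"
proof -
  have "((f \<odot> g) \<odot> h) w = (f \<odot> (g \<odot> h)) w" for w
  proof -
    define n where "n = length w"
    define F where "F = (\<lambda>j i. f (take j w) * g (take (i - j) (drop j w)) * h (drop i w))"
    have L: "((f \<odot> g) \<odot> h) w = (\<Sum>i\<le>n. \<Sum>j\<le>i. F j i)"
      unfolding nc_mult_def n_def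
    proof (intro sum.cong refl)
      fix i assume "i \<in> {..length w}"
      then have li: "length (take i w) = i" by simp
      show "(\<Sum>j\<le>length (take i w). f (take j (take i w)) * g (drop j (take i w))) * h (drop i w) = (\<Sum>j\<le>i. F j i)"
        unfolding sum_distrib_right li
      proof (intro sum.cong refl)
        fix j assume "j \<in> {..i}"
        then show "f (take j (take i w)) * g (drop j (take i w)) * h (drop i w) = F j i"
          by (simp add: F_def take_take drop_take min_def)
      qed
    qed
    have R: "(f \<odot> (g \<odot> h)) w = (\<Sum>j\<le>n. \<Sum>b\<le>n - j. F j (j + b))"
      unfolding nc_mult_def n_def
    proof (intro sum.cong refl)
      fix j assume "j \<in> {..length w}"
      show "f (take j w) * (\<Sum>i\<le>length (drop j w). g (take i (drop j w)) * h (drop i (drop j w))) =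
         (\<Sum>b\<le>length w - j. F j (j + b))"
        unfolding sum_distrib_left length_drop
        by (intro sum.cong refl) (simp add: F_def mult.assoc add.commute)
    qed
    have "(\<Sum>j\<le>n. \<Sum>b\<le>n - j. F j (j + b)) = (\<Sum>(j,b)\<in>{(j,b). j + b \<le> n}. F j (j + b))"
    proof -
      have "{(j,b). j + b \<le> n} = Sigma {..n} (\<lambda>j. {..n - j})" by auto
      then show ?thesis by (simp add: sum.Sigma)
    qed
    also have "\<dots> = (\<Sum>k\<le>n. \<Sum>j\<le>k. F j (j + (k - j)))"
      by (rule sum.triangle_reindex_eq)
    also have "\<dots> = (\<Sum>k\<le>n. \<Sum>j\<le>k. F j k)"
      by (intro sum.cong refl) simp
    finally show ?thesis using L R by simp
  qed
  then show ?thesis by auto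
qed


definition supp :: "ncp \<Rightarrow> nat list set" where "supp f = {w. f w \<noteq> 0}"

lemma nc_mult_nonzero:
  assumes "(f \<odot> g) w \<noteq> 0"
  shows "\<exists>i\<le>length w. f (take i w) \<noteq> 0 \<and> g (drop i w) \<noteq> 0"
proof (rule ccontr)
  assume "\<not> ?thesis"
  then have "(f \<odot> g) w = 0" unfolding nc_mult_def by (intro sum.neutral) auto
  with assms show False by simp
qed

lemma supp_mult: "supp (f \<odot> g) \<subseteq> (\<lambda>(u,v). u @ v) ` (supp f \<times> supp g)"
proof
  fix w assume "w \<in> supp (f \<odot> g)"
  then obtain i where "f (take i w) \<noteq> 0" "g (drop i w) \<noteq> 0"
    using nc_mult_nonzero unfolding supp_def by blast
  then show "w \<in> (\<lambda>(u,v). u @ v) ` (supp f \<times> supp g)"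
    unfolding supp_def by (intro image_eqI[of _ _ "(take i w, drop i w)"]) auto
qed

lemma ncpoly_iff: "f \<in> ncpoly \<longleftrightarrow> finite (supp f) \<and> (\<forall>w. f w \<noteq> 0 \<longrightarrow> set w \<subseteq> {0,1,2})"
  by (simp add: ncpoly_def supp_def)

lemma ncpoly_mon: "set w \<subseteq> {0,1,2} \<Longrightarrow> nc_mon w \<in> ncpoly"
proof -
  assume "set w \<subseteq> {0,1,2}"
  moreover have "supp (nc_mon w) = {w}" by (auto simp: supp_def nc_mon_def)
  ultimately show ?thesis by (auto simp: ncpoly_iff nc_mon_def split: if_splits)
qed

lemma ncpoly_add: "f \<in> ncpoly \<Longrightarrow> g \<in> ncpoly \<Longrightarrow> f + g \<in> ncpoly"
proof -
  assume a: "f \<in> ncpoly" "g \<in> ncpoly"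
  have "supp (f + g) \<subseteq> supp f \<union> supp g" by (auto simp: supp_def)
  then have "finite (supp (f + g))" using a by (auto simp: ncpoly_iff intro: finite_subset)
  moreover have "set w \<subseteq> {0,1,2}" if "(f + g) w \<noteq> 0" for w
  proof -
    have "f w \<noteq> 0 \<or> g w \<noteq> 0" using that by auto
    then show ?thesis using a unfolding ncpoly_iff by blast
  qed
  ultimately show ?thesis by (simp add: ncpoly_iff)
qed

lemma ncpoly_scale: "f \<in> ncpoly \<Longrightarrow> c *: f \<in> ncpoly"
proof -
  assume a: "f \<in> ncpoly"
  have "supp (c *: f) \<subseteq> supp f" by (auto simp: supp_def nc_scale_def)
  with a show ?thesis unfolding ncpoly_iff by (auto intro: finite_subset simp: nc_scale_def)
qed

lemma ncpoly_uminus: "f \<in> ncpoly \<Longrightarrow> - f \<in> ncpoly"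
proof -
  assume a: "f \<in> ncpoly"
  have "supp (- f) = supp f" by (auto simp: supp_def)
  with a show ?thesis unfolding ncpoly_iff by auto
qed

lemma ncpoly_diff: "f \<in> ncpoly \<Longrightarrow> g \<in> ncpoly \<Longrightarrow> f - g \<in> ncpoly"
  using ncpoly_add[of f "- g"] ncpoly_uminus[of g] by simp

lemma ncpoly_zero: "0 \<in> ncpoly"
  by (simp add: ncpoly_iff supp_def)

lemma ncpoly_mult: "f \<in> ncpoly \<Longrightarrow> g \<in> ncpoly \<Longrightarrow> f \<odot> g \<in> ncpoly"
proof -
  assume a: "f \<in> ncpoly" "g \<in> ncpoly"
  have "finite (supp (f \<odot> g))"
    using a supp_mult[of f g] by (auto simp: ncpoly_iff intro: finite_subset)
  moreover have "set w \<subseteq> {0,1,2}" if nz: "(f \<odot> g) w \<noteq> 0" for w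
  proof -
    obtain i where "f (take i w) \<noteq> 0" "g (drop i w) \<noteq> 0"
      using nc_mult_nonzero[OF nz] by blast
    then have "set (take i w) \<subseteq> {0,1,2}" "set (drop i w) \<subseteq> {0,1,2}"
      using a by (auto simp: ncpoly_iff)
    then show ?thesis by (metis append_take_drop_id le_sup_iff set_append)
  qed
  ultimately show ?thesis by (simp add: ncpoly_iff)
qed

lemma ncpoly_sum: "(\<And>a. a \<in> A \<Longrightarrow> h a \<in> ncpoly) \<Longrightarrow> sum h A \<in> ncpoly"
  by (induction A rule: infinite_finite_induct) (auto intro: ncpoly_add ncpoly_zero)

lemma ncpoly_subspace: "ncv.subspace ncpoly"
  unfolding ncv.subspace_def by (auto intro: ncpoly_add ncpoly_scale ncpoly_zero)

lemma ncpoly_span: assumes "S \<subseteq> ncpoly" "x \<in> ncv.span S" shows "x \<in> ncpoly"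
  using ncv.span_minimal[OF assms(1) ncpoly_subspace] assms(2) by blast

lemma ncpoly_repr:
  assumes "f \<in> ncpoly"
  shows "f = (\<Sum>w\<in>supp f. f w *: nc_mon w)"
proof -
  have fin: "finite (supp f)" using assms by (simp add: ncpoly_iff)
  have "(\<Sum>w\<in>supp f. f w *: nc_mon w) x = f x" for x
  proof -
    have "(\<Sum>w\<in>supp f. f w *: nc_mon w) x = (\<Sum>w\<in>supp f. (if w = x then f x else 0))"
      unfolding sum_apply_fun by (intro sum.cong refl) (auto simp: nc_scale_def nc_mon_def)
    also have "\<dots> = f x" using fin by (simp add: sum.delta' supp_def)
    finally show ?thesis .
  qed
  then show ?thesis by auto
qed

lemma deg_iff: "f \<in> ncpoly_deg k \<longleftrightarrow> f \<in> ncpoly \<and> (\<forall>w. f w \<noteq> 0 \<longrightarrow> length w = k)"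
  by (simp add: ncpoly_deg_def)

lemma deg_mon: "set w \<subseteq> {0,1,2} \<Longrightarrow> nc_mon w \<in> ncpoly_deg (length w)"
  using ncpoly_mon[of w] by (auto simp: deg_iff nc_mon_def split: if_splits)

lemma deg_add: "f \<in> ncpoly_deg k \<Longrightarrow> g \<in> ncpoly_deg k \<Longrightarrow> f + g \<in> ncpoly_deg k"
  by (auto simp: deg_iff ncpoly_add) (metis add.right_neutral add_0)

lemma deg_scale: "f \<in> ncpoly_deg k \<Longrightarrow> c *: f \<in> ncpoly_deg k"
  using ncpoly_scale[of f c] by (auto simp: deg_iff nc_scale_def)

lemma deg_zero: "0 \<in> ncpoly_deg k"
  by (simp add: deg_iff ncpoly_zero)

lemma deg_uminus: "f \<in> ncpoly_deg k \<Longrightarrow> - f \<in> ncpoly_deg k"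
  by (auto simp: deg_iff ncpoly_uminus)

lemma deg_diff: "f \<in> ncpoly_deg k \<Longrightarrow> g \<in> ncpoly_deg k \<Longrightarrow> f - g \<in> ncpoly_deg k"
  using deg_add[of f k "- g"] deg_uminus[of g k] by simp

lemma deg_mult: "f \<in> ncpoly_deg a \<Longrightarrow> g \<in> ncpoly_deg b \<Longrightarrow> f \<odot> g \<in> ncpoly_deg (a + b)"
proof -
  assume fa: "f \<in> ncpoly_deg a" and gb: "g \<in> ncpoly_deg b"
  have "length w = a + b" if nz: "(f \<odot> g) w \<noteq> 0" for w
  proof -
    obtain i where i: "i \<le> length w" "f (take i w) \<noteq> 0" "g (drop i w) \<noteq> 0"
      using nc_mult_nonzero[OF nz] by blast
    then have "length (take i w) = a" "length (drop i w) = b" using fa gb by (auto simp: deg_iff)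
    then show ?thesis using i(1) by simp
  qed
  with fa gb show ?thesis by (auto simp: deg_iff ncpoly_mult)
qed

lemma deg_subspace: "ncv.subspace (ncpoly_deg k)"
  unfolding ncv.subspace_def by (auto intro: deg_add deg_scale deg_zero)

lemma deg_span: "S \<subseteq> ncpoly_deg k \<Longrightarrow> ncv.span S \<subseteq> ncpoly_deg k"
  using ncv.span_minimal[OF _ deg_subspace] by blast

definition words :: "nat \<Rightarrow> nat list set" where
  "words k = {w. set w \<subseteq> {0,1,2} \<and> length w = k}"

lemma finite_words: "finite (words k)"
  unfolding words_def by (rule finite_lists_length_eq) simp

lemma deg_in_span_words: "ncpoly_deg k \<subseteq> ncv.span (nc_mon ` words k)"
proof
  fix f assume f: "f \<in> ncpoly_deg k"
  then have fp: "f \<in> ncpoly" by (simp add: deg_iff)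
  have "supp f \<subseteq> words k" using f by (auto simp: deg_iff ncpoly_iff supp_def words_def)
  then have "(\<Sum>w\<in>supp f. f w *: nc_mon w) \<in> ncv.span (nc_mon ` words k)"
    by (intro ncv.span_sum ncv.span_scale ncv.span_base) auto
  then show "f \<in> ncv.span (nc_mon ` words k)" using ncpoly_repr[OF fp] by simp
qed


lemmas ncpoly_mon_simp[simp] = ncpoly_mon

lemmas ncpoly_intros[intro, simp] = ncpoly_add ncpoly_diff ncpoly_scale ncpoly_mult ncpoly_uminus ncpoly_zero

lemma v1_poly: "v1 \<omega> t \<in> ncpoly" by (simp add: v1_def nc_prod3_def)
lemma v2_poly: "v2 \<omega> t \<in> ncpoly" by (simp add: v2_def nc_prod3_def)

lemma T_rels_poly: "T_rels \<omega> t \<subseteq> ncpoly"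
  by (auto simp: T_rels_def v1_poly v2_poly)

definition r1 :: "complex \<Rightarrow> ncp" where
  "r1 t = nc_mon [2,0,1] - nc_mon [1,2,0] - t *: nc_mon [0,2,1] + t *: nc_mon [1,0,2]"
definition r2 :: "complex \<Rightarrow> ncp" where
  "r2 t = t *: nc_mon [2,1,0] - t *: nc_mon [0,2,1] - nc_mon [1,2,0] + nc_mon [0,1,2]"

lemma prod3_mon: "nc_prod3 (nc_mon [a]) (nc_mon [b]) (nc_mon [c]) = nc_mon [a,b,c]"
  by (simp add: nc_prod3_def nc_mon_mult)

lemma v1_eq: assumes "\<omega>^2 = - 1 - \<omega>" shows "v1 \<omega> t = r1 t + \<omega> *: r2 t"
  unfolding v1_def r1_def r2_def prod3_mon
  by (auto simp: fun_eq_iff nc_scale_def nc_mon_def assms algebra_simps)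

lemma v2_eq: assumes "\<omega>^2 = - 1 - \<omega>" shows "v2 \<omega> t = r1 t + \<omega>^2 *: r2 t"
  unfolding v2_def r1_def r2_def prod3_mon
  by (auto simp: fun_eq_iff nc_scale_def nc_mon_def assms algebra_simps)

locale TT =
  fixes \<omega> t :: complex
  assumes w3: "\<omega>^3 = 1" and w1: "\<omega> \<noteq> 1" and t0: "t \<noteq> 0"
begin

abbreviation I where "I \<equiv> nc_ideal (T_rels \<omega> t)"

lemma w2: "\<omega>^2 = - 1 - \<omega>"
proof -
  have "(\<omega> - 1) * (\<omega>^2 + \<omega> + 1) = \<omega>^3 - 1" by (simp add: algebra_simps power2_eq_square power3_eq_cube)
  then have "(\<omega> - 1) * (\<omega>^2 + \<omega> + 1) = 0" using w3 by simp
  then have "\<omega>^2 + \<omega> + 1 = 0" using w1 by simp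
  then show ?thesis by (simp add: algebra_simps eq_neg_iff_add_eq_0)
qed

lemma wdiff: "\<omega> - \<omega>^2 \<noteq> 0"
proof
  assume "\<omega> - \<omega>^2 = 0"
  then have "\<omega> * (1 - \<omega>) = 0" by (simp add: algebra_simps power2_eq_square)
  moreover have "\<omega> \<noteq> 0" using w3 by auto
  ultimately show False using w1 by simp
qed

lemma I_gen: "a \<in> ncpoly \<Longrightarrow> g \<in> T_rels \<omega> t \<Longrightarrow> b \<in> ncpoly \<Longrightarrow> a \<odot> g \<odot> b \<in> I"
  unfolding nc_ideal_def by (rule ncv.span_base) blast

lemma I_poly: "f \<in> I \<Longrightarrow> f \<in> ncpoly"
  unfolding nc_ideal_def
  by (erule ncpoly_span[rotated]) (use T_rels_poly in blast)

lemma I_add: "f \<in> I \<Longrightarrow> g \<in> I \<Longrightarrow> f + g \<in> I"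
  unfolding nc_ideal_def by (rule ncv.span_add)
lemma I_diff: "f \<in> I \<Longrightarrow> g \<in> I \<Longrightarrow> f - g \<in> I"
  unfolding nc_ideal_def by (rule ncv.span_diff)
lemma I_scale: "f \<in> I \<Longrightarrow> c *: f \<in> I"
  unfolding nc_ideal_def by (rule ncv.span_scale)
lemma I_zero: "0 \<in> I"
  unfolding nc_ideal_def by (rule ncv.span_zero)
lemma I_uminus: "f \<in> I \<Longrightarrow> - f \<in> I"
  unfolding nc_ideal_def by (rule ncv.span_neg)

lemma I_subspace: "ncv.subspace I"
  unfolding nc_ideal_def by (rule ncv.subspace_span)

lemma I_mult_left: assumes c: "c \<in> ncpoly" and f: "f \<in> I" shows "c \<odot> f \<in> I"
proof -
  let ?S = "{f. c \<odot> f \<in> I}"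
  have sub: "ncv.subspace ?S"
    unfolding ncv.subspace_def
    by (auto simp: nc_mult_zero_right nc_mult_add_right nc_mult_scale_right intro: I_zero I_add I_scale)
  have gen: "{nc_mult (nc_mult a g) b | a g b. a \<in> ncpoly \<and> g \<in> T_rels \<omega> t \<and> b \<in> ncpoly} \<subseteq> ?S"
  proof
    fix x assume "x \<in> {nc_mult (nc_mult a g) b | a g b. a \<in> ncpoly \<and> g \<in> T_rels \<omega> t \<and> b \<in> ncpoly}"
    then obtain a g b where x: "x = a \<odot> g \<odot> b" "a \<in> ncpoly" "g \<in> T_rels \<omega> t" "b \<in> ncpoly" by blast
    have "c \<odot> x = (c \<odot> a) \<odot> g \<odot> b" by (simp add: x nc_mult_assoc)
    also have "\<dots> \<in> I" using x c by (intro I_gen) auto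
    finally show "x \<in> ?S" by simp
  qed
  show ?thesis using ncv.span_minimal[OF gen sub] f unfolding nc_ideal_def by blast
qed

lemma I_mult_right: assumes c: "c \<in> ncpoly" and f: "f \<in> I" shows "f \<odot> c \<in> I"
proof -
  let ?S = "{f. f \<odot> c \<in> I}"
  have sub: "ncv.subspace ?S"
    unfolding ncv.subspace_def
    by (auto simp: nc_mult_zero_left nc_mult_add_left nc_mult_scale_left intro: I_zero I_add I_scale)
  have gen: "{nc_mult (nc_mult a g) b | a g b. a \<in> ncpoly \<and> g \<in> T_rels \<omega> t \<and> b \<in> ncpoly} \<subseteq> ?S"
  proof
    fix x assume "x \<in> {nc_mult (nc_mult a g) b | a g b. a \<in> ncpoly \<and> g \<in> T_rels \<omega> t \<and> b \<in> ncpoly}"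
    then obtain a g b where x: "x = a \<odot> g \<odot> b" "a \<in> ncpoly" "g \<in> T_rels \<omega> t" "b \<in> ncpoly" by blast
    have "x \<odot> c = a \<odot> g \<odot> (b \<odot> c)" by (simp add: x nc_mult_assoc)
    also have "\<dots> \<in> I" using x c by (intro I_gen) auto
    finally show "x \<in> ?S" by simp
  qed
  show ?thesis using ncv.span_minimal[OF gen sub] f unfolding nc_ideal_def by blast
qed

definition cg :: "ncp \<Rightarrow> ncp \<Rightarrow> bool" (infix "\<doteq>" 50) where "f \<doteq> g \<longleftrightarrow> f - g \<in> I"

lemma cg_refl[simp]: "f \<doteq> f" by (simp add: cg_def I_zero)
lemma cg_sym: "f \<doteq> g \<Longrightarrow> g \<doteq> f"
  unfolding cg_def using I_uminus by fastforce
lemma cg_trans: "f \<doteq> g \<Longrightarrow> g \<doteq> h \<Longrightarrow> f \<doteq> h"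
  unfolding cg_def using I_add by fastforce
lemmas [trans] = cg_trans
lemma cg_add: "f \<doteq> g \<Longrightarrow> f' \<doteq> g' \<Longrightarrow> f + f' \<doteq> g + g'"
  unfolding cg_def using I_add by (fastforce simp: algebra_simps)
lemma cg_diff: "f \<doteq> g \<Longrightarrow> f' \<doteq> g' \<Longrightarrow> f - f' \<doteq> g - g'"
  unfolding cg_def using I_diff by (fastforce simp: algebra_simps)
lemma cg_scale: "f \<doteq> g \<Longrightarrow> c *: f \<doteq> c *: g"
  unfolding cg_def using I_scale by (fastforce simp: nc_scale_diff[symmetric])
lemma cg_mult_left: "c \<in> ncpoly \<Longrightarrow> f \<doteq> g \<Longrightarrow> c \<odot> f \<doteq> c \<odot> g"
  unfolding cg_def using I_mult_left by (fastforce simp: nc_mult_diff_right[symmetric])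
lemma cg_mult_right: "c \<in> ncpoly \<Longrightarrow> f \<doteq> g \<Longrightarrow> f \<odot> c \<doteq> g \<odot> c"
  unfolding cg_def using I_mult_right by (fastforce simp: nc_mult_diff_left[symmetric])
lemma cg_eq_trans[trans]: "a = b \<Longrightarrow> b \<doteq> c \<Longrightarrow> a \<doteq> c" by simp
lemma cg_trans_eq[trans]: "a \<doteq> b \<Longrightarrow> b = c \<Longrightarrow> a \<doteq> c" by simp
lemma cg_I: "f \<in> I \<Longrightarrow> f \<doteq> 0" by (simp add: cg_def)
lemma cg_I': "f - g \<in> I \<Longrightarrow> f \<doteq> g" by (simp add: cg_def)

lemma r2_I: "r2 t \<in> I"
proof -
  have "v1 \<omega> t - v2 \<omega> t = (\<omega> - \<omega>^2) *: r2 t"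
    using v1_eq[OF w2] v2_eq[OF w2] by (simp add: nc_scale_def fun_eq_iff algebra_simps)
  then have "r2 t = (1 / (\<omega> - \<omega>^2)) *: (v1 \<omega> t - v2 \<omega> t)"
    using wdiff by (simp add: nc_scale_scale)
  moreover have "v1 \<omega> t \<in> I" "v2 \<omega> t \<in> I"
    using I_gen[of "nc_mon []" "v1 \<omega> t" "nc_mon []"] I_gen[of "nc_mon []" "v2 \<omega> t" "nc_mon []"]
    by (auto simp: T_rels_def nc_mon_one_left nc_mon_one_right)
  ultimately show ?thesis by (simp add: I_scale I_diff)
qed

lemma r1_I: "r1 t \<in> I"
proof -
  have "r1 t = v1 \<omega> t - \<omega> *: r2 t" using v1_eq[OF w2] by simp
  moreover have "v1 \<omega> t \<in> I"
    using I_gen[of "nc_mon []" "v1 \<omega> t" "nc_mon []"]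
    by (auto simp: T_rels_def nc_mon_one_left nc_mon_one_right)
  ultimately show ?thesis using r2_I by (simp add: I_scale I_diff)
qed

lemma sq_I: "c \<in> {0,1,2} \<Longrightarrow> nc_mon (u @ [c,c] @ v) \<in> I" if "set u \<subseteq> {0,1,2}" "set v \<subseteq> {0,1,2}"
proof -
  assume c: "c \<in> {0,1,2}"
  have "nc_mon [c,c] \<in> T_rels \<omega> t" using c by (auto simp: T_rels_def nc_mon_mult)
  then have "nc_mon u \<odot> nc_mon [c,c] \<odot> nc_mon v \<in> I"
    using that by (intro I_gen) (auto intro: ncpoly_mon)
  then show ?thesis by (simp add: nc_mon_mult)
qed

end


fun npow :: "ncp \<Rightarrow> nat \<Rightarrow> ncp" where
  "npow f 0 = nc_mon []"
| "npow f (Suc n) = f \<odot> npow f n"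

lemma npow_Suc': "npow f (Suc n) = npow f n \<odot> f"
proof (induction n)
  case 0 then show ?case by (simp add: nc_mon_one_left nc_mon_one_right)
next
  case (Suc n)
  have "npow f (Suc (Suc n)) = f \<odot> (npow f n \<odot> f)" using Suc by simp
  then show ?case by (simp add: nc_mult_assoc)
qed

lemma deg_mon': "set w \<subseteq> {0,1,2} \<Longrightarrow> length w = k \<Longrightarrow> nc_mon w \<in> ncpoly_deg k"
  using deg_mon by blast

lemma npow_poly[simp]: "f \<in> ncpoly \<Longrightarrow> npow f n \<in> ncpoly"
  by (induction n) auto

lemma npow_deg: "f \<in> ncpoly_deg d \<Longrightarrow> npow f n \<in> ncpoly_deg (d * n)"
proof (induction n)
  case 0
  then show ?case using deg_mon[of "[]"] by simp
next
  case (Suc n)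
  then show ?case using deg_mult[of f d "npow f n" "d * n"] by simp
qed

definition mw :: "bool \<Rightarrow> bool \<Rightarrow> bool \<Rightarrow> nat list" where
  "mw e1 e2 e3 = (if e1 then [0] else []) @ (if e2 then [1] else []) @ (if e3 then [2] else [])"

abbreviation Mono where "Mono e1 e2 e3 \<equiv> nc_mon (mw e1 e2 e3)"

lemma mw_set: "set (mw e1 e2 e3) \<subseteq> {0,1,2}" by (auto simp: mw_def)
lemma mw_len: "length (mw e1 e2 e3) = of_bool e1 + of_bool e2 + of_bool e3" by (simp add: mw_def)

lemma Mono_poly[simp]: "Mono e1 e2 e3 \<in> ncpoly" using mw_set by simp

definition bits :: "bool \<Rightarrow> bool \<Rightarrow> bool \<Rightarrow> nat" where
  "bits e1 e2 e3 = of_bool e1 + of_bool e2 + of_bool e3"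

context TT begin

definition al where "al = X \<odot> Y - t *: (Y \<odot> X)"
definition be where "be = Y \<odot> Z - t *: (Z \<odot> Y)"
definition ga where "ga = Z \<odot> X - t *: (X \<odot> Z)"

lemma al_mon: "al = nc_mon [0,1] - t *: nc_mon [1,0]" by (simp add: al_def nc_mon_mult)
lemma be_mon: "be = nc_mon [1,2] - t *: nc_mon [2,1]" by (simp add: be_def nc_mon_mult)
lemma ga_mon: "ga = nc_mon [2,0] - t *: nc_mon [0,2]" by (simp add: ga_def nc_mon_mult)

lemma al_poly[simp]: "al \<in> ncpoly" and be_poly[simp]: "be \<in> ncpoly" and ga_poly[simp]: "ga \<in> ncpoly"
  by (simp_all add: al_def be_def ga_def)

lemma al_deg: "al \<in> ncpoly_deg 2" and be_deg: "be \<in> ncpoly_deg 2" and ga_deg: "ga \<in> ncpoly_deg 2"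
  unfolding al_mon be_mon ga_mon
  by (auto intro!: deg_diff deg_scale deg_mon')

definition R where "R i j l = npow al i \<odot> (npow be j \<odot> npow ga l)"

lemma R_poly[simp]: "R i j l \<in> ncpoly" by (simp add: R_def)

definition skew :: "complex \<Rightarrow> ncp \<Rightarrow> ncp \<Rightarrow> bool" where
  "skew c A B \<longleftrightarrow> A \<odot> B \<doteq> c *: (B \<odot> A)"

lemma skew_cong: "skew c A B \<Longrightarrow> c = d \<Longrightarrow> skew d A B" by simp

lemma skew_mult_left:
  assumes "skew c A B" "skew d C B" "A \<in> ncpoly" "B \<in> ncpoly" "C \<in> ncpoly"
  shows "skew (c * d) (A \<odot> C) B"
proof -
  have "A \<odot> C \<odot> B = A \<odot> (C \<odot> B)" by (simp add: nc_mult_assoc)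
  also have "\<dots> \<doteq> A \<odot> (d *: (B \<odot> C))"
    using assms by (intro cg_mult_left) (auto simp: skew_def)
  also have "A \<odot> (d *: (B \<odot> C)) = d *: ((A \<odot> B) \<odot> C)" by (simp add: nc_mult_scale_right nc_mult_assoc)
  also have "\<dots> \<doteq> d *: ((c *: (B \<odot> A)) \<odot> C)"
    using assms by (intro cg_scale cg_mult_right) (auto simp: skew_def)
  also have "d *: ((c *: (B \<odot> A)) \<odot> C) = (c * d) *: (B \<odot> (A \<odot> C))"
    by (simp add: nc_mult_scale_left nc_scale_scale nc_mult_assoc mult.commute)
  finally show ?thesis unfolding skew_def
    by (meson cg_trans cg_refl)
qed

lemma skew_mult_right:
  assumes "skew c A B" "skew d A C" "A \<in> ncpoly" "B \<in> ncpoly" "C \<in> ncpoly"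
  shows "skew (c * d) A (B \<odot> C)"
proof -
  have "A \<odot> (B \<odot> C) = (A \<odot> B) \<odot> C" by (simp add: nc_mult_assoc)
  also have "\<dots> \<doteq> (c *: (B \<odot> A)) \<odot> C"
    using assms by (intro cg_mult_right) (auto simp: skew_def)
  also have "(c *: (B \<odot> A)) \<odot> C = c *: (B \<odot> (A \<odot> C))" by (simp add: nc_mult_scale_left nc_mult_assoc)
  also have "\<dots> \<doteq> c *: (B \<odot> (d *: (C \<odot> A)))"
    using assms by (intro cg_scale cg_mult_left) (auto simp: skew_def)
  also have "c *: (B \<odot> (d *: (C \<odot> A))) = (c * d) *: ((B \<odot> C) \<odot> A)"
    by (simp add: nc_mult_scale_right nc_scale_scale nc_mult_assoc)
  finally show ?thesis unfolding skew_def
    by (meson cg_trans cg_refl)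
qed

lemma skew_lin_left:
  assumes "skew c A B" "skew c C B"
  shows "skew c (A - s *: C) B"
proof -
  have "(A - s *: C) \<odot> B = A \<odot> B - s *: (C \<odot> B)" by (simp add: nc_mult_diff_left nc_mult_scale_left)
  also have "\<dots> \<doteq> c *: (B \<odot> A) - s *: (c *: (B \<odot> C))"
    using assms unfolding skew_def by (intro cg_diff cg_scale)
  also have "c *: (B \<odot> A) - s *: (c *: (B \<odot> C)) = c *: (B \<odot> (A - s *: C))"
    by (simp add: nc_mult_diff_right nc_mult_scale_right nc_scale_diff nc_scale_scale mult.commute)
  finally show ?thesis unfolding skew_def .
qed

lemma skew_lin_right:
  assumes "skew c A B" "skew c A C"
  shows "skew c A (B - s *: C)"
proof -
  have "A \<odot> (B - s *: C) = A \<odot> B - s *: (A \<odot> C)" by (simp add: nc_mult_diff_right nc_mult_scale_right)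
  also have "\<dots> \<doteq> c *: (B \<odot> A) - s *: (c *: (C \<odot> A))"
    using assms unfolding skew_def by (intro cg_diff cg_scale)
  also have "c *: (B \<odot> A) - s *: (c *: (C \<odot> A)) = c *: ((B - s *: C) \<odot> A)"
    by (simp add: nc_mult_diff_left nc_mult_scale_left nc_scale_diff nc_scale_scale mult.commute)
  finally show ?thesis unfolding skew_def .
qed

lemma skew_one_left: "skew 1 (nc_mon []) B"
  by (simp add: skew_def nc_mon_one_left nc_mon_one_right nc_scale_one)
lemma skew_one_right: "skew 1 A (nc_mon [])"
  by (simp add: skew_def nc_mon_one_left nc_mon_one_right nc_scale_one)

lemma skew_pow_left:
  assumes "skew c A B" "A \<in> ncpoly" "B \<in> ncpoly"
  shows "skew (c ^ n) (npow A n) B"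
proof (induction n)
  case 0 then show ?case using skew_one_left by simp
next
  case (Suc n)
  then show ?case using skew_mult_left[OF assms(1) Suc] assms by simp
qed

lemma skew_pow_right:
  assumes "skew c A B" "A \<in> ncpoly" "B \<in> ncpoly"
  shows "skew (c ^ n) A (npow B n)"
proof (induction n)
  case 0 then show ?case using skew_one_right by simp
next
  case (Suc n)
  then show ?case using skew_mult_right[OF assms(1) Suc] assms by simp
qed

end


context TT begin

lemmas expand = al_mon be_mon ga_mon nc_mult_diff_left nc_mult_diff_right nc_mult_scale_left
  nc_mult_scale_right nc_mon_mult nc_mult_add_left nc_mult_add_right nc_scale_diff nc_scale_scale nc_scale_add

lemma sqI: "c \<in> {0,1,2} \<Longrightarrow> set u \<subseteq> {0,1,2} \<Longrightarrow> set v \<subseteq> {0,1,2} \<Longrightarrow> w = u @ [c,c] @ v \<Longrightarrow> nc_mon w \<in> I"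
  using sq_I[of u v c] by simp

lemma sk1: "skew (-t) X al"
proof -
  have "X \<odot> al - (-t) *: (al \<odot> X) = nc_mon [0,0,1] - (t*t) *: nc_mon [1,0,0]"
    by (simp add: expand, (auto simp: fun_eq_iff nc_scale_def nc_mon_def algebra_simps t0)?)
  also have "\<dots> \<in> I" by (intro I_diff I_scale sqI[of 0 "[]" "[1]"] sqI[of 0 "[1]" "[]"]) auto
  finally show ?thesis by (simp add: skew_def cg_def)
qed

lemma sk2: "skew 1 X be"
proof -
  have "X \<odot> be - 1 *: (be \<odot> X) = r2 t"
    by (simp add: expand r2_def, (auto simp: fun_eq_iff nc_scale_def nc_mon_def algebra_simps t0)?)
  then show ?thesis using r2_I by (simp add: skew_def cg_def)
qed

lemma sk3: "skew (-1/t) X ga"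
proof -
  have "X \<odot> ga - (-1/t) *: (ga \<odot> X) = (1/t) *: nc_mon [2,0,0] - t *: nc_mon [0,0,2]"
    by (simp add: expand, (auto simp: fun_eq_iff nc_scale_def nc_mon_def algebra_simps t0)?)
  also have "\<dots> \<in> I" by (intro I_diff I_scale sqI[of 0 "[2]" "[]"] sqI[of 0 "[]" "[2]"]) auto
  finally show ?thesis by (simp add: skew_def cg_def)
qed

lemma sk4: "skew (-1/t) Y al"
proof -
  have "Y \<odot> al - (-1/t) *: (al \<odot> Y) = (1/t) *: nc_mon [0,1,1] - t *: nc_mon [1,1,0]"
    by (simp add: expand, (auto simp: fun_eq_iff nc_scale_def nc_mon_def algebra_simps t0)?)
  also have "\<dots> \<in> I" by (intro I_diff I_scale sqI[of 1 "[0]" "[]"] sqI[of 1 "[]" "[0]"]) auto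
  finally show ?thesis by (simp add: skew_def cg_def)
qed

lemma sk5: "skew (-t) Y be"
proof -
  have "Y \<odot> be - (-t) *: (be \<odot> Y) = nc_mon [1,1,2] - (t*t) *: nc_mon [2,1,1]"
    by (simp add: expand, (auto simp: fun_eq_iff nc_scale_def nc_mon_def algebra_simps t0)?)
  also have "\<dots> \<in> I" by (intro I_diff I_scale sqI[of 1 "[]" "[2]"] sqI[of 1 "[2]" "[]"]) auto
  finally show ?thesis by (simp add: skew_def cg_def)
qed

lemma sk6: "skew 1 Y ga"
proof -
  have "Y \<odot> ga - 1 *: (ga \<odot> Y) = - r1 t"
    by (simp add: expand r1_def, (auto simp: fun_eq_iff nc_scale_def nc_mon_def algebra_simps t0)?)
  then show ?thesis using r1_I I_uminus by (simp add: skew_def cg_def)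
qed

lemma sk7: "skew 1 Z al"
proof -
  have "Z \<odot> al - 1 *: (al \<odot> Z) = r1 t - r2 t"
    by (simp add: expand r1_def r2_def, (auto simp: fun_eq_iff nc_scale_def nc_mon_def algebra_simps t0)?)
  then show ?thesis using r1_I r2_I I_diff by (simp add: skew_def cg_def)
qed

lemma sk8: "skew (-1/t) Z be"
proof -
  have "Z \<odot> be - (-1/t) *: (be \<odot> Z) = (1/t) *: nc_mon [1,2,2] - t *: nc_mon [2,2,1]"
    by (simp add: expand, (auto simp: fun_eq_iff nc_scale_def nc_mon_def algebra_simps t0)?)
  also have "\<dots> \<in> I" by (intro I_diff I_scale sqI[of 2 "[1]" "[]"] sqI[of 2 "[]" "[1]"]) auto
  finally show ?thesis by (simp add: skew_def cg_def)
qed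

lemma sk9: "skew (-t) Z ga"
proof -
  have "Z \<odot> ga - (-t) *: (ga \<odot> Z) = nc_mon [2,2,0] - (t*t) *: nc_mon [0,2,2]"
    by (simp add: expand, (auto simp: fun_eq_iff nc_scale_def nc_mon_def algebra_simps t0)?)
  also have "\<dots> \<in> I" by (intro I_diff I_scale sqI[of 2 "[]" "[0]"] sqI[of 2 "[0]" "[]"]) auto
  finally show ?thesis by (simp add: skew_def cg_def)
qed

lemma sk_be_al: "skew (-1/t) be al"
proof -
  have a: "skew ((-1/t)*1) (Y \<odot> Z) al" by (rule skew_mult_left[OF sk4 sk7]) auto
  have b: "skew (1*(-1/t)) (Z \<odot> Y) al" by (rule skew_mult_left[OF sk7 sk4]) auto
  have a': "skew (-1/t) (Y \<odot> Z) al" using a by simp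
  have b': "skew (-1/t) (Z \<odot> Y) al" using b by simp
  show ?thesis unfolding be_def by (rule skew_lin_left[OF a' b'])
qed

lemma sk_ga_al: "skew (-t) ga al"
proof -
  have a: "skew (1*(-t)) (Z \<odot> X) al" by (rule skew_mult_left[OF sk7 sk1]) auto
  have b: "skew ((-t)*1) (X \<odot> Z) al" by (rule skew_mult_left[OF sk1 sk7]) auto
  have a': "skew (-t) (Z \<odot> X) al" using a by simp
  have b': "skew (-t) (X \<odot> Z) al" using b by simp
  show ?thesis unfolding ga_def by (rule skew_lin_left[OF a' b'])
qed

lemma sk_ga_be: "skew (-1/t) ga be"
proof -
  have a: "skew ((-1/t)*1) (Z \<odot> X) be" by (rule skew_mult_left[OF sk8 sk2]) auto
  have b: "skew (1*(-1/t)) (X \<odot> Z) be" by (rule skew_mult_left[OF sk2 sk8]) auto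
  have a': "skew (-1/t) (Z \<odot> X) be" using a by simp
  have b': "skew (-1/t) (X \<odot> Z) be" using b by simp
  show ?thesis unfolding ga_def by (rule skew_lin_left[OF a' b'])
qed

lemma skew_R:
  assumes "skew a L al" "skew b L be" "skew c L ga" "L \<in> ncpoly"
  shows "\<exists>s. skew s L (R i j l)"
proof -
  have p1: "skew (a^i) L (npow al i)" by (rule skew_pow_right[OF assms(1)]) (use assms in auto)
  have p2: "skew (b^j) L (npow be j)" by (rule skew_pow_right[OF assms(2)]) (use assms in auto)
  have p3: "skew (c^l) L (npow ga l)" by (rule skew_pow_right[OF assms(3)]) (use assms in auto)
  have p23: "skew (b^j * c^l) L (npow be j \<odot> npow ga l)" by (rule skew_mult_right[OF p2 p3]) (use assms in auto)
  have "skew (a^i * (b^j * c^l)) L (R i j l)" unfolding R_def by (rule skew_mult_right[OF p1 p23]) (use assms in auto)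
  then show ?thesis by blast
qed

lemma skew_XR: "\<exists>s. skew s X (R i j l)" using skew_R[OF sk1 sk2 sk3] by simp
lemma skew_YR: "\<exists>s. skew s Y (R i j l)" using skew_R[OF sk4 sk5 sk6] by simp
lemma skew_ZR: "\<exists>s. skew s Z (R i j l)" using skew_R[OF sk7 sk8 sk9] by simp

lemma R_al: "\<exists>c. R i j l \<odot> al \<doteq> c *: R (Suc i) j l"
proof -
  have q1: "skew ((-1/t)^j) (npow be j) al" by (rule skew_pow_left[OF sk_be_al]) auto
  have q2: "skew ((-t)^l) (npow ga l) al" by (rule skew_pow_left[OF sk_ga_al]) auto
  obtain c where c: "skew c (npow be j \<odot> npow ga l) al"
    using skew_mult_left[OF q1 q2] by auto
  have "R i j l \<odot> al = npow al i \<odot> ((npow be j \<odot> npow ga l) \<odot> al)" by (simp add: R_def nc_mult_assoc)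
  also have "\<dots> \<doteq> npow al i \<odot> (c *: (al \<odot> (npow be j \<odot> npow ga l)))"
    using c by (intro cg_mult_left) (auto simp: skew_def)
  also have "npow al i \<odot> (c *: (al \<odot> (npow be j \<odot> npow ga l))) = c *: R (Suc i) j l"
    by (simp del: npow.simps(2) add: R_def nc_mult_scale_right npow_Suc' nc_mult_assoc)
  finally show ?thesis by blast
qed

lemma R_be: "\<exists>c. R i j l \<odot> be \<doteq> c *: R i (Suc j) l"
proof -
  have c: "skew ((-1/t)^l) (npow ga l) be"
    by (rule skew_pow_left[OF sk_ga_be]) auto
  have "R i j l \<odot> be = npow al i \<odot> (npow be j \<odot> (npow ga l \<odot> be))" by (simp add: R_def nc_mult_assoc)
  also have "\<dots> \<doteq> npow al i \<odot> (npow be j \<odot> ((-1/t)^l *: (be \<odot> npow ga l)))"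
    using c by (intro cg_mult_left) (auto simp: skew_def)
  also have "npow al i \<odot> (npow be j \<odot> ((-1/t)^l *: (be \<odot> npow ga l))) = (-1/t)^l *: R i (Suc j) l"
    by (simp del: npow.simps(2) add: R_def nc_mult_scale_right npow_Suc' nc_mult_assoc)
  finally show ?thesis by blast
qed

lemma R_ga: "R i j l \<odot> ga = R i j (Suc l)"
  by (simp del: npow.simps(2) add: R_def npow_Suc' nc_mult_assoc)

end


context TT begin

lemma mw_simps[simp]:
  "mw False False False = []" "mw False False True = [2]" "mw False True False = [1]" "mw False True True = [1,2]"
  "mw True False False = [0]" "mw True False True = [0,2]" "mw True True False = [0,1]" "mw True True True = [0,1,2]"
  by (simp_all add: mw_def)

lemmas expand2 = expand nc_scale_one t0

lemma memI_cg: "A - B \<in> I \<Longrightarrow> A \<doteq> B" by (simp add: cg_def)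

lemma tX0: "X \<odot> Mono False e2 e3 = Mono True e2 e3"
  by (cases e2; cases e3) (simp_all add: nc_mon_mult)
lemma tX1: "X \<odot> Mono True e2 e3 \<doteq> 0"
proof -
  have "X \<odot> Mono True e2 e3 = nc_mon ([] @ [0,0] @ mw False e2 e3)"
    by (cases e2; cases e3) (simp_all add: nc_mon_mult)
  also have "\<dots> \<in> I" by (rule sq_I) (auto simp: mw_def)
  finally show ?thesis by (simp add: cg_def)
qed

lemma tY0: "Y \<odot> Mono False False e3 = Mono False True e3"
  by (cases e3) (simp_all add: nc_mon_mult)
lemma tY1: "Y \<odot> Mono False True e3 \<doteq> 0"
proof -
  have "Y \<odot> Mono False True e3 = nc_mon ([] @ [1,1] @ mw False False e3)"
    by (cases e3) (simp_all add: nc_mon_mult)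
  also have "\<dots> \<in> I" by (rule sq_I) (auto simp: mw_def)
  finally show ?thesis by (simp add: cg_def)
qed
lemma tY2: "Y \<odot> Mono True False e3 = (1/t) *: Mono True True e3 - (1/t) *: (al \<odot> Mono False False e3)"
  by (cases e3; simp add: expand2, (auto simp: fun_eq_iff nc_scale_def nc_mon_def field_simps t0)?)
lemma tY3: "Y \<odot> Mono True True e3 \<doteq> - (1/t) *: (al \<odot> Mono False True e3)"
proof -
  have "Y \<odot> Mono True True e3 - (- (1/t) *: (al \<odot> Mono False True e3)) = (1/t) *: nc_mon ([0] @ [1,1] @ mw False False e3)"
    by (cases e3; simp add: expand2, (auto simp: fun_eq_iff nc_scale_def nc_mon_def field_simps t0)?)
  also have "\<dots> \<in> I" by (intro I_scale sq_I) (auto simp: mw_def)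
  finally show ?thesis by (simp add: cg_def)
qed

lemma tZ0: "Z \<odot> Mono False False False = Mono False False True"
  by (simp add: nc_mon_mult)
lemma tZ1: "Z \<odot> Mono False False True \<doteq> 0"
proof -
  have "Z \<odot> Mono False False True = nc_mon ([] @ [2,2] @ [])" by (simp add: nc_mon_mult)
  also have "\<dots> \<in> I" by (rule sq_I) auto
  finally show ?thesis by (simp add: cg_def)
qed
lemma tZ2: "Z \<odot> Mono False True False = (1/t) *: Mono False True True - (1/t) *: (be \<odot> Mono False False False)"
  by (simp add: expand2, (auto simp: fun_eq_iff nc_scale_def nc_mon_def field_simps t0)?)
lemma tZ3: "Z \<odot> Mono False True True \<doteq> - (1/t) *: (be \<odot> Mono False False True)"
proof -
  have "Z \<odot> Mono False True True - (- (1/t) *: (be \<odot> Mono False False True)) = (1/t) *: nc_mon ([1] @ [2,2] @ [])"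
    by (simp add: expand2, (auto simp: fun_eq_iff nc_scale_def nc_mon_def field_simps t0)?)
  also have "\<dots> \<in> I" by (intro I_scale sq_I) auto
  finally show ?thesis by (simp add: cg_def)
qed
lemma tZ4: "Z \<odot> Mono True False False = t *: Mono True False True + ga \<odot> Mono False False False"
  by (simp add: expand2, (auto simp: fun_eq_iff nc_scale_def nc_mon_def field_simps t0)?)
lemma tZ5: "Z \<odot> Mono True False True \<doteq> ga \<odot> Mono False False True"
proof -
  have "Z \<odot> Mono True False True - ga \<odot> Mono False False True = t *: nc_mon ([0] @ [2,2] @ [])"
    by (simp add: expand2, (auto simp: fun_eq_iff nc_scale_def nc_mon_def field_simps t0)?)
  also have "\<dots> \<in> I" by (intro I_scale sq_I) auto
  finally show ?thesis by (simp add: cg_def)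
qed
lemma tZ6: "Z \<odot> Mono True True False \<doteq> Mono True True True - be \<odot> Mono True False False + ga \<odot> Mono False True False"
proof -
  have "Z \<odot> Mono True True False - (Mono True True True - be \<odot> Mono True False False + ga \<odot> Mono False True False) = - r2 t"
    by (simp add: expand2 r2_def, (auto simp: fun_eq_iff nc_scale_def nc_mon_def field_simps t0)?)
  also have "\<dots> \<in> I" by (intro I_uminus r2_I)
  finally show ?thesis by (simp add: cg_def)
qed
lemma tZ7: "Z \<odot> Mono True True True \<doteq> - (be \<odot> Mono True False True) + ga \<odot> Mono False True True"
proof -
  have "Z \<odot> Mono True True True - (- (be \<odot> Mono True False True) + ga \<odot> Mono False True True) = nc_mon ([0,1] @ [2,2] @ []) - r2 t \<odot> Z"
    by (simp add: expand2 r2_def, (auto simp: fun_eq_iff nc_scale_def nc_mon_def field_simps t0)?)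
  also have "\<dots> \<in> I" by (intro I_diff sq_I I_mult_right r2_I) auto
  finally show ?thesis by (simp add: cg_def)
qed

end


context TT begin

definition SP :: "nat \<Rightarrow> ncp set" where
  "SP k = {R i j l \<odot> Mono e1 e2 e3 | i j l e1 e2 e3. 2*(i+j+l) + bits e1 e2 e3 = k}"

definition Good :: "nat \<Rightarrow> ncp \<Rightarrow> bool" where
  "Good k f \<longleftrightarrow> (\<exists>g\<in>ncv.span (SP k). f \<doteq> g)"

lemma good_cg: "f \<doteq> f' \<Longrightarrow> Good k f' \<Longrightarrow> Good k f"
  unfolding Good_def by (meson cg_trans)

lemma good_add: "Good k f \<Longrightarrow> Good k f' \<Longrightarrow> Good k (f + f')"
  unfolding Good_def by (meson cg_add ncv.span_add)
lemma good_diff: "Good k f \<Longrightarrow> Good k f' \<Longrightarrow> Good k (f - f')"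
  unfolding Good_def by (meson cg_diff ncv.span_diff)
lemma good_scale: "Good k f \<Longrightarrow> Good k (c *: f)"
  unfolding Good_def by (meson cg_scale ncv.span_scale)
lemma good_zero: "Good k 0"
  unfolding Good_def using ncv.span_zero cg_refl by blast
lemma good_uminus: "Good k f \<Longrightarrow> Good k (- f)"
  using good_diff[OF good_zero, of k f] by simp

lemma good_B: "2*(i+j+l) + bits e1 e2 e3 = k \<Longrightarrow> Good k (R i j l \<odot> Mono e1 e2 e3)"
  unfolding Good_def SP_def
  by (intro bexI[of _ "R i j l \<odot> Mono e1 e2 e3"] cg_refl ncv.span_base) blast

lemma good_Ral: "2*(Suc i+j+l) + bits e1 e2 e3 = k \<Longrightarrow> Good k (R i j l \<odot> (al \<odot> Mono e1 e2 e3))"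
proof -
  assume d: "2*(Suc i+j+l) + bits e1 e2 e3 = k"
  obtain c where c: "R i j l \<odot> al \<doteq> c *: R (Suc i) j l" using R_al by blast
  have "R i j l \<odot> (al \<odot> Mono e1 e2 e3) = (R i j l \<odot> al) \<odot> Mono e1 e2 e3" by (simp add: nc_mult_assoc)
  also have "\<dots> \<doteq> (c *: R (Suc i) j l) \<odot> Mono e1 e2 e3" by (intro cg_mult_right c) simp
  finally show ?thesis using good_scale[OF good_B[OF d], of c] by (simp add: nc_mult_scale_left good_cg)
qed

lemma good_Rbe: "2*(i+Suc j+l) + bits e1 e2 e3 = k \<Longrightarrow> Good k (R i j l \<odot> (be \<odot> Mono e1 e2 e3))"
proof -
  assume d: "2*(i+Suc j+l) + bits e1 e2 e3 = k"
  obtain c where c: "R i j l \<odot> be \<doteq> c *: R i (Suc j) l" using R_be by blast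
  have "R i j l \<odot> (be \<odot> Mono e1 e2 e3) = (R i j l \<odot> be) \<odot> Mono e1 e2 e3" by (simp add: nc_mult_assoc)
  also have "\<dots> \<doteq> (c *: R i (Suc j) l) \<odot> Mono e1 e2 e3" by (intro cg_mult_right c) simp
  finally show ?thesis using good_scale[OF good_B[OF d], of c] by (simp add: nc_mult_scale_left good_cg)
qed

lemma good_Rga: "2*(i+j+Suc l) + bits e1 e2 e3 = k \<Longrightarrow> Good k (R i j l \<odot> (ga \<odot> Mono e1 e2 e3))"
proof -
  assume d: "2*(i+j+Suc l) + bits e1 e2 e3 = k"
  have "R i j l \<odot> (ga \<odot> Mono e1 e2 e3) = R i j (Suc l) \<odot> Mono e1 e2 e3"
    by (simp add: R_ga nc_mult_assoc[symmetric])
  then show ?thesis using good_B[OF d] by simp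
qed

lemma good_step:
  assumes "skew s L (R i j l)" "L \<in> ncpoly" "L \<odot> Mono e1 e2 e3 \<doteq> RHS" "Good k (R i j l \<odot> RHS)"
  shows "Good k (L \<odot> (R i j l \<odot> Mono e1 e2 e3))"
proof -
  have "L \<odot> (R i j l \<odot> Mono e1 e2 e3) = (L \<odot> R i j l) \<odot> Mono e1 e2 e3" by (simp add: nc_mult_assoc)
  also have "\<dots> \<doteq> (s *: (R i j l \<odot> L)) \<odot> Mono e1 e2 e3"
    using assms(1) by (intro cg_mult_right) (auto simp: skew_def)
  also have "(s *: (R i j l \<odot> L)) \<odot> Mono e1 e2 e3 = s *: (R i j l \<odot> (L \<odot> Mono e1 e2 e3))"
    by (simp add: nc_mult_scale_left nc_mult_assoc)
  also have "\<dots> \<doteq> s *: (R i j l \<odot> RHS)"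
    using assms(3) by (intro cg_scale cg_mult_left) auto
  finally show ?thesis using good_scale[OF assms(4)] good_cg by blast
qed

lemmas distr = nc_mult_add_right nc_mult_diff_right nc_mult_scale_right nc_mult_uminus_right nc_mult_zero_right

lemma cg_of_eq: "a = b \<Longrightarrow> a \<doteq> b" by simp

lemma good_X: assumes d: "2*(i+j+l) + bits e1 e2 e3 = k" shows "Good (Suc k) (X \<odot> (R i j l \<odot> Mono e1 e2 e3))"
proof -
  obtain s where s: "skew s X (R i j l)" using skew_XR by blast
  show ?thesis
    using d
    apply (induct e1)
    subgoal by (rule good_step[OF s _ tX1]) (simp_all add: distr good_zero)
    subgoal by (rule good_step[OF s _ cg_of_eq[OF tX0]]) (auto intro!: good_B simp: bits_def simp del: mw_simps)
    done
qed

lemma good_Y: assumes d: "2*(i+j+l) + bits e1 e2 e3 = k" shows "Good (Suc k) (Y \<odot> (R i j l \<odot> Mono e1 e2 e3))"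
proof -
  obtain s where s: "skew s Y (R i j l)" using skew_YR by blast
  show ?thesis
    using d
    apply (induct e1; induct e2)
    subgoal by (rule good_step[OF s _ tY3])
         (auto simp: distr bits_def simp del: mw_simps intro!: good_uminus good_scale good_Ral)
    subgoal by (rule good_step[OF s _ cg_of_eq[OF tY2]])
         (auto simp: distr bits_def simp del: mw_simps intro!: good_diff good_scale good_B good_Ral)
    subgoal by (rule good_step[OF s _ tY1]) (simp_all add: distr good_zero)
    subgoal by (rule good_step[OF s _ cg_of_eq[OF tY0]]) (auto intro!: good_B simp: bits_def simp del: mw_simps)
    done
qed

lemma good_Z: assumes d: "2*(i+j+l) + bits e1 e2 e3 = k" shows "Good (Suc k) (Z \<odot> (R i j l \<odot> Mono e1 e2 e3))"
proof -
  obtain s where s: "skew s Z (R i j l)" using skew_ZR by blast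
  show ?thesis
    using d
    apply (induct e1; induct e2; induct e3)
    subgoal by (rule good_step[OF s _ tZ7])
         (auto simp: distr bits_def simp del: mw_simps intro!: good_add good_diff good_uminus good_Rbe good_Rga)
    subgoal by (rule good_step[OF s _ tZ6])
         (auto simp: distr bits_def simp del: mw_simps intro!: good_add good_diff good_B good_Rbe good_Rga)
    subgoal by (rule good_step[OF s _ tZ5])
         (auto simp: distr bits_def simp del: mw_simps intro!: good_Rga)
    subgoal by (rule good_step[OF s _ cg_of_eq[OF tZ4]])
         (auto simp: distr bits_def simp del: mw_simps intro!: good_add good_scale good_B good_Rga)
    subgoal by (rule good_step[OF s _ tZ3])
         (auto simp: distr bits_def simp del: mw_simps intro!: good_uminus good_scale good_Rbe)
    subgoal by (rule good_step[OF s _ cg_of_eq[OF tZ2]])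
         (auto simp: distr bits_def simp del: mw_simps intro!: good_diff good_scale good_B good_Rbe)
    subgoal by (rule good_step[OF s _ tZ1]) (simp_all add: distr good_zero)
    subgoal by (rule good_step[OF s _ cg_of_eq[OF tZ0]]) (auto intro!: good_B simp: bits_def simp del: mw_simps)
    done
qed

end


definition trip :: "nat \<Rightarrow> (nat \<times> nat \<times> nat) set" where
  "trip k = {(a,b,c). a + b + c = k}"

lemma card_line: "card {(a,b). a + b = (n::nat)} = Suc n"
proof -
  have "{(a,b). a + b = n} = (\<lambda>a. (a, n - a)) ` {..n}" by auto
  moreover have "inj_on (\<lambda>a. (a, n - a)) {..n}" by (auto simp: inj_on_def)
  ultimately show ?thesis by (simp add: card_image)
qed

lemma card_tri: "2 * card {(a,b). a + b \<le> (k::nat)} = (k+1)*(k+2)"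
proof (induction k)
  case 0
  have "{(a,b). a + b \<le> (0::nat)} = {(0,0)}" by auto
  then show ?case by simp
next
  case (Suc k)
  have e: "{(a,b). a + b \<le> Suc k} = {(a,b). a + b \<le> k} \<union> {(a,b). a + b = Suc k}" by auto
  have f1: "finite {(a,b). a + b \<le> (k::nat)}"
    by (rule finite_subset[of _ "{..k} \<times> {..k}"]) auto
  have f2: "finite {(a,b). a + b = Suc (k::nat)}"
    by (rule finite_subset[of _ "{..Suc k} \<times> {..Suc k}"]) auto
  have "card {(a,b). a + b \<le> Suc k} = card {(a,b). a + b \<le> k} + card {(a,b). a + b = Suc k}"
    unfolding e by (rule card_Un_disjoint[OF f1 f2]) auto
  then show ?case using Suc card_line[of "Suc k"] by simp
qed

lemma card_trip: "card (trip k) = (k+1)*(k+2) div 2"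
proof -
  have "trip k = (\<lambda>(a,b). (a, b, k - a - b)) ` {(a,b). a + b \<le> k}"
    unfolding trip_def by (auto simp: image_iff) 
  moreover have "inj_on (\<lambda>(a,b). (a, b, k - a - b)) {(a,b). a + b \<le> k}" by (auto simp: inj_on_def)
  ultimately have "card (trip k) = card {(a,b). a + b \<le> k}" by (simp add: card_image)
  then show ?thesis using card_tri[of k] by simp
qed

lemma finite_trip: "finite (trip k)"
  unfolding trip_def by (rule finite_subset[of _ "{..k} \<times> {..k} \<times> {..k}"]) auto

context TT begin

lemma R_deg: "R i j l \<in> ncpoly_deg (2*(i+j+l))"
proof -
  have "R i j l \<in> ncpoly_deg (2 * i + (2 * j + 2 * l))"
    unfolding R_def
    using npow_deg[OF al_deg, of i] npow_deg[OF be_deg, of j] npow_deg[OF ga_deg, of l]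
    by (intro deg_mult) auto
  then show ?thesis by (simp add: algebra_simps)
qed

lemma Mono_deg: "Mono e1 e2 e3 \<in> ncpoly_deg (bits e1 e2 e3)"
  using deg_mon[OF mw_set, of e1 e2 e3] by (simp add: mw_len bits_def)

lemma SP_deg: "SP k \<subseteq> ncpoly_deg k"
  unfolding SP_def using deg_mult[OF R_deg Mono_deg] by auto

lemma SP_image: "SP k \<subseteq> (\<lambda>(a,b,c). R (a div 2) (b div 2) (c div 2) \<odot> Mono (odd a) (odd b) (odd c)) ` trip k"
proof
  fix x assume "x \<in> SP k"
  then obtain i j l e1 e2 e3 where x: "x = R i j l \<odot> Mono e1 e2 e3" "2*(i+j+l) + bits e1 e2 e3 = k"
    unfolding SP_def by blast
  let ?a = "2*i + of_bool e1" and ?b = "2*j + of_bool e2" and ?c = "2*l + of_bool e3"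
  have "(?a, ?b, ?c) \<in> trip k" using x(2) by (simp add: trip_def bits_def)
  moreover have "x = (\<lambda>(a,b,c). R (a div 2) (b div 2) (c div 2) \<odot> Mono (odd a) (odd b) (odd c)) (?a, ?b, ?c)"
    using x(1) by simp
  ultimately show "x \<in> (\<lambda>(a,b,c). R (a div 2) (b div 2) (c div 2) \<odot> Mono (odd a) (odd b) (odd c)) ` trip k"
    by blast
qed

lemma SP_finite: "finite (SP k)"
  using finite_subset[OF SP_image finite_imageI[OF finite_trip]] .

lemma SP_card: "card (SP k) \<le> card (trip k)"
  using card_mono[OF finite_imageI[OF finite_trip] SP_image] card_image_le[OF finite_trip] by (meson le_trans)

lemma good_letter:
  assumes c: "c \<in> {0,1,2}" and f: "Good k f"
  shows "Good (Suc k) (nc_mon [c] \<odot> f)"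
proof -
  obtain g where g: "g \<in> ncv.span (SP k)" "f \<doteq> g" using f unfolding Good_def by blast
  let ?S = "{g. Good (Suc k) (nc_mon [c] \<odot> g)}"
  have sub: "ncv.subspace ?S"
    unfolding ncv.subspace_def
    by (auto simp: nc_mult_zero_right nc_mult_add_right nc_mult_scale_right intro: good_zero good_add good_scale)
  have base: "SP k \<subseteq> ?S"
  proof
    fix x assume "x \<in> SP k"
    then obtain i j l e1 e2 e3 where x: "x = R i j l \<odot> Mono e1 e2 e3" "2*(i+j+l) + bits e1 e2 e3 = k"
      unfolding SP_def by blast
    show "x \<in> ?S" using c good_X[OF x(2)] good_Y[OF x(2)] good_Z[OF x(2)] x(1) by auto
  qed
  have "Good (Suc k) (nc_mon [c] \<odot> g)" using ncv.span_minimal[OF base sub] g(1) by blast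
  moreover have "nc_mon [c] \<odot> f \<doteq> nc_mon [c] \<odot> g" using g(2) c by (intro cg_mult_left) auto
  ultimately show ?thesis using good_cg by blast
qed

lemma R000: "R 0 0 0 \<odot> Mono False False False = nc_mon []"
  by (simp add: R_def nc_mon_one_left del: mw_simps) (simp add: mw_def nc_mon_one_left)

lemma good_words: "set w \<subseteq> {0,1,2} \<Longrightarrow> Good (length w) (nc_mon w)"
proof (induction w)
  case Nil
  have "Good 0 (R 0 0 0 \<odot> Mono False False False)" by (rule good_B) (simp add: bits_def)
  then show ?case by (simp only: R000 list.size)
next
  case (Cons c w)
  have "nc_mon (c # w) = nc_mon [c] \<odot> nc_mon w" by (simp add: nc_mon_mult)
  then show ?case using good_letter[of c "length w" "nc_mon w"] Cons by auto
qed

lemma upper_span: "ncpoly_deg k \<subseteq> ncv.span ((I \<inter> ncpoly_deg k) \<union> SP k)"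
proof -
  have "nc_mon w \<in> ncv.span ((I \<inter> ncpoly_deg k) \<union> SP k)" if w: "w \<in> words k" for w
  proof -
    have ws: "set w \<subseteq> {0,1,2}" "length w = k" using w by (auto simp: words_def)
    obtain g where g: "g \<in> ncv.span (SP k)" "nc_mon w \<doteq> g" using good_words[OF ws(1)] ws(2) unfolding Good_def by blast
    have gd: "g \<in> ncpoly_deg k" using deg_span[OF SP_deg] g(1) by blast
    have md: "nc_mon w \<in> ncpoly_deg k" using deg_mon[OF ws(1)] ws(2) by simp
    have "nc_mon w - g \<in> I \<inter> ncpoly_deg k" using g(2) gd md by (auto simp: cg_def intro: deg_diff)
    then have "nc_mon w - g \<in> ncv.span ((I \<inter> ncpoly_deg k) \<union> SP k)" by (intro ncv.span_base) blast
    moreover have "g \<in> ncv.span ((I \<inter> ncpoly_deg k) \<union> SP k)" using g(1) ncv.span_mono[of "SP k"] by blast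
    ultimately have "(nc_mon w - g) + g \<in> ncv.span ((I \<inter> ncpoly_deg k) \<union> SP k)" by (rule ncv.span_add)
    then show ?thesis by simp
  qed
  then have "nc_mon ` words k \<subseteq> ncv.span ((I \<inter> ncpoly_deg k) \<union> SP k)" by blast
  then have "ncv.span (nc_mon ` words k) \<subseteq> ncv.span ((I \<inter> ncpoly_deg k) \<union> SP k)"
    using ncv.span_minimal ncv.subspace_span by blast
  then show ?thesis using deg_in_span_words by blast
qed

end


type_synonym idx = "int \<times> int \<times> int \<times> bool \<times> bool \<times> bool"
type_synonym mv = "idx \<Rightarrow> complex"

definition P :: "complex \<Rightarrow> int \<Rightarrow> complex" where "P t n = (-t) powi n"

fun Lx :: "complex \<Rightarrow> mv \<Rightarrow> mv" where
  "Lx t f (i,j,l,True,e2,e3) = P t (i - l) * f(i,j,l,False,e2,e3)"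
| "Lx t f (i,j,l,False,e2,e3) = 0"

fun Ly :: "complex \<Rightarrow> mv \<Rightarrow> mv" where
  "Ly t f (i,j,l,False,True,e3) = P t (j - i) * f(i,j,l,False,False,e3) + P t (l - i) * f(i-1,j,l,True,True,e3)"
| "Ly t f (i,j,l,True,True,e3) = - P t (j - i - 1) * f(i,j,l,True,False,e3)"
| "Ly t f (i,j,l,False,False,e3) = P t (l - i) * f(i-1,j,l,True,False,e3)"
| "Ly t f (i,j,l,True,False,e3) = 0"

fun Lz :: "complex \<Rightarrow> mv \<Rightarrow> mv" where
  "Lz t f (i,j,l,False,False,False) = P t (-j) * f(i,j-1,l,False,True,False) + P t (l - 1 - j) * f(i,j,l-1,True,False,False)"
| "Lz t f (i,j,l,False,False,True) = P t (l - j) * f(i,j,l,False,False,False) + P t (-j) * f(i,j-1,l,False,True,True) + P t (l - 1 - j) * f(i,j,l-1,True,False,True)"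
| "Lz t f (i,j,l,False,True,False) = P t (l - 1 - j) * f(i,j,l-1,True,True,False)"
| "Lz t f (i,j,l,False,True,True) = - P t (l - j - 1) * f(i,j,l,False,True,False) + P t (l - 1 - j) * f(i,j,l-1,True,True,True)"
| "Lz t f (i,j,l,True,False,False) = - P t (1 - j) * f(i,j-1,l,True,True,False)"
| "Lz t f (i,j,l,True,False,True) = - P t (l - j + 1) * f(i,j,l,True,False,False) - P t (1 - j) * f(i,j-1,l,True,True,True)"
| "Lz t f (i,j,l,True,True,False) = 0"
| "Lz t f (i,j,l,True,True,True) = P t (l - j) * f(i,j,l,True,True,False)"

lemma P_mult: "t \<noteq> 0 \<Longrightarrow> P t m * P t n = P t (m + n)"
  by (simp add: P_def power_int_add)
lemma P_mult': "t \<noteq> 0 \<Longrightarrow> P t m * (P t n * x) = P t (m + n) * x"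
  by (simp add: P_mult mult.assoc[symmetric])
lemma P_nz: "t \<noteq> 0 \<Longrightarrow> P t n \<noteq> 0"
  by (simp add: P_def)
lemma P_one: "P t 1 = - t" by (simp add: P_def)

lemma Lx_xx: "Lx t (Lx t f) q = 0"
proof (cases q)
  case (fields i j l e1 e2 e3)
  then show ?thesis by (cases e1) simp_all
qed

lemma Ly_yy: assumes "t \<noteq> 0" shows "Ly t (Ly t f) q = 0"
proof (cases q)
  case (fields i j l e1 e2 e3)
  then show ?thesis using assms by (cases e1; cases e2; cases e3) (simp_all add: P_mult P_mult' algebra_simps)
qed

lemma Lz_zz: assumes "t \<noteq> 0" shows "Lz t (Lz t f) q = 0"
proof (cases q)
  case (fields i j l e1 e2 e3)
  then show ?thesis using assms by (cases e1; cases e2; cases e3) (simp_all add: P_mult P_mult' algebra_simps)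
qed

lemma rel1: assumes "t \<noteq> 0" shows "Lz t (Lx t (Ly t f)) q - Ly t (Lz t (Lx t f)) q + P t 1 * Lx t (Lz t (Ly t f)) q - P t 1 * Ly t (Lx t (Lz t f)) q = 0"
proof (cases q)
  case (fields i j l e1 e2 e3)
  then show ?thesis using assms by (cases e1; cases e2; cases e3) (simp_all add: P_mult P_mult' algebra_simps)
qed

lemma rel2: assumes "t \<noteq> 0" shows "- P t 1 * Lz t (Ly t (Lx t f)) q + P t 1 * Lx t (Lz t (Ly t f)) q - Ly t (Lz t (Lx t f)) q + Lx t (Ly t (Lz t f)) q = 0"
proof (cases q)
  case (fields i j l e1 e2 e3)
  then show ?thesis using assms by (cases e1; cases e2; cases e3) (simp_all add: P_mult P_mult' algebra_simps)
qed


definition Lop :: "complex \<Rightarrow> nat \<Rightarrow> mv \<Rightarrow> mv" where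
  "Lop t c = (if c = 0 then Lx t else if c = 1 then Ly t else if c = 2 then Lz t else (\<lambda>f q. 0))"

lemma L_lin:
  fixes L :: "mv \<Rightarrow> mv"
  assumes "L \<in> {Lx t, Ly t, Lz t}"
  shows "L (\<lambda>q. a * f q + b * g q) q = a * L f q + b * L g q"
proof (cases q)
  case (fields i j l e1 e2 e3)
  then show ?thesis using assms by (cases e1; cases e2; cases e3) (auto simp: algebra_simps)
qed

lemma Lop_lin: "Lop t c (\<lambda>q. a * f q + b * g q) = (\<lambda>q. a * Lop t c f q + b * Lop t c g q)"
  unfolding Lop_def using L_lin[of _ t] by (auto simp: fun_eq_iff)

lemma Lop_add: "Lop t c (\<lambda>q. f q + g q) = (\<lambda>q. Lop t c f q + Lop t c g q)"
  using Lop_lin[of t c 1 f 1 g] by simp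
lemma Lop_scale: "Lop t c (\<lambda>q. a * f q) = (\<lambda>q. a * Lop t c f q)"
  using Lop_lin[of t c a f 0 f] by simp
lemma Lop_zero: "Lop t c (\<lambda>q. 0) = (\<lambda>q. 0)"
  using Lop_lin[of t c 0 "\<lambda>q. 0" 0 "\<lambda>q. 0"] by simp

lemma Lop_sum: "Lop t c (\<lambda>q. \<Sum>k\<in>A. h k q) = (\<lambda>q. \<Sum>k\<in>A. Lop t c (h k) q)"
proof (induction A rule: infinite_finite_induct)
  case (infinite A) then show ?case by (simp add: Lop_zero)
next
  case empty then show ?case by (simp add: Lop_zero)
next
  case (insert x F)
  then show ?case by (simp add: Lop_add)
qed

fun Op :: "complex \<Rightarrow> nat list \<Rightarrow> mv \<Rightarrow> mv" where
  "Op t [] m = m"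
| "Op t (c # w) m = Lop t c (Op t w m)"

lemma Op_append: "Op t (u @ v) m = Op t u (Op t v m)"
  by (induction u) auto

lemma Op_scale: "Op t w (\<lambda>q. a * f q) = (\<lambda>q. a * Op t w f q)"
  by (induction w) (auto simp: Lop_scale)
lemma Op_zero: "Op t w (\<lambda>q. 0) = (\<lambda>q. 0)"
  by (induction w) (auto simp: Lop_zero)
lemma Op_sum: "Op t w (\<lambda>q. \<Sum>k\<in>A. h k q) = (\<lambda>q. \<Sum>k\<in>A. Op t w (h k) q)"
  by (induction w) (auto simp: Lop_sum)

definition Psi :: "complex \<Rightarrow> ncp \<Rightarrow> mv \<Rightarrow> mv" where
  "Psi t f m = (\<lambda>q. \<Sum>w\<in>supp f. f w * Op t w m q)"

lemma Psi_sup: assumes "finite A" "supp f \<subseteq> A" shows "Psi t f m = (\<lambda>q. \<Sum>w\<in>A. f w * Op t w m q)"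
  unfolding Psi_def using assms by (auto intro!: sum.mono_neutral_left simp: supp_def fun_eq_iff)

lemma Psi_add: assumes "f \<in> ncpoly" "g \<in> ncpoly" shows "Psi t (f + g) m = (\<lambda>q. Psi t f m q + Psi t g m q)"
proof -
  have fin: "finite (supp f \<union> supp g)" using assms by (simp add: ncpoly_iff)
  have "supp (f + g) \<subseteq> supp f \<union> supp g" by (auto simp: supp_def)
  then show ?thesis
    using Psi_sup[OF fin, of "f + g"] Psi_sup[OF fin, of f] Psi_sup[OF fin, of g]
    by (simp add: algebra_simps sum.distrib)
qed

lemma Psi_scale: assumes "f \<in> ncpoly" shows "Psi t (c *: f) m = (\<lambda>q. c * Psi t f m q)"
proof -
  have fin: "finite (supp f)" using assms by (simp add: ncpoly_iff)
  have "supp (c *: f) \<subseteq> supp f" by (auto simp: supp_def nc_scale_def)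
  then show ?thesis
    using Psi_sup[OF fin, of "c *: f"] Psi_sup[OF fin, of f]
    by (simp add: nc_scale_def sum_distrib_left mult.assoc)
qed

lemma Psi_uminus: assumes "f \<in> ncpoly" shows "Psi t (- f) m = (\<lambda>q. - Psi t f m q)"
proof -
  have "- f = (-1) *: f" by (simp add: nc_scale_def fun_eq_iff)
  then show ?thesis using Psi_scale[OF assms, of t "-1" m] by simp
qed

lemma Psi_diff: assumes "f \<in> ncpoly" "g \<in> ncpoly" shows "Psi t (f - g) m = (\<lambda>q. Psi t f m q - Psi t g m q)"
  using Psi_add[of f "- g" t m] Psi_uminus[of g t m] assms ncpoly_uminus[of g] by simp

lemma Psi_mon: "Psi t (nc_mon w) m = Op t w m"
proof -
  have "supp (nc_mon w) = {w}" by (auto simp: supp_def nc_mon_def)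
  then show ?thesis by (simp add: Psi_def nc_mon_def)
qed

lemma Psi_op_scale: "Psi t f (\<lambda>q. a * m q) = (\<lambda>q. a * Psi t f m q)"
  by (simp add: Psi_def Op_scale sum_distrib_left algebra_simps)

lemma Psi_op_zero: "Psi t f (\<lambda>q. 0) = (\<lambda>q. 0)"
  by (simp add: Psi_def Op_zero)

lemma Psi_mult:
  assumes f: "f \<in> ncpoly" and g: "g \<in> ncpoly"
  shows "Psi t (f \<odot> g) m = Psi t f (Psi t g m)"
proof -
  let ?Sf = "supp f" and ?Sg = "supp g"
  have ff: "finite ?Sf" and fg: "finite ?Sg" using f g by (auto simp: ncpoly_iff)
  let ?A = "(\<lambda>(u,v). u @ v) ` (?Sf \<times> ?Sg)"
  have fA: "finite ?A" using ff fg by auto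
  have tl: "\<And>a b::nat list. take (length a) (a @ b) = a" "\<And>a b::nat list. drop (length a) (a @ b) = b" by simp_all
  have fS: "finite (Sigma ?A (\<lambda>w. {..length w}))" using fA by auto
  have "Psi t (f \<odot> g) m q = Psi t f (Psi t g m) q" for q
  proof -
    define F where "F = (\<lambda>u v. f u * g v * Op t (u @ v) m q)"
    have "Psi t (f \<odot> g) m q = (\<Sum>w\<in>?A. (f \<odot> g) w * Op t w m q)"
      using Psi_sup[OF fA supp_mult] by simp
    also have "\<dots> = (\<Sum>w\<in>?A. \<Sum>i\<le>length w. F (take i w) (drop i w))"
      unfolding nc_mult_def F_def by (simp add: sum_distrib_right)
    also have "\<dots> = (\<Sum>(w,i)\<in>Sigma ?A (\<lambda>w. {..length w}). F (take i w) (drop i w))"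
      by (rule sum.Sigma) (use fA in auto)
    also have "\<dots> = (\<Sum>(w,i)\<in>{(w,i). (w,i) \<in> Sigma ?A (\<lambda>w. {..length w}) \<and> take i w \<in> ?Sf \<and> drop i w \<in> ?Sg}. F (take i w) (drop i w))"
      by (rule sum.mono_neutral_right) (use fS in \<open>auto simp: F_def supp_def\<close>)
    also have "\<dots> = (\<Sum>(u,v)\<in>?Sf \<times> ?Sg. F u v)"
      by (rule sum.reindex_bij_witness[of _ "\<lambda>(u,v). (u @ v, length u)" "\<lambda>(w,i). (take i w, drop i w)"])
         (auto simp: image_iff tl simp del: take_append drop_append)
    also have "\<dots> = (\<Sum>u\<in>?Sf. f u * (\<Sum>v\<in>?Sg. g v * Op t u (Op t v m) q))"
      unfolding F_def sum.cartesian_product[symmetric] Op_append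
      by (simp add: sum_distrib_left mult.assoc)
    also have "\<dots> = Psi t f (Psi t g m) q"
      unfolding Psi_def Op_sum[symmetric] by (simp add: Op_sum Op_scale sum_distrib_left)
    finally show ?thesis .
  qed
  then show ?thesis by auto
qed


definition delta :: "idx \<Rightarrow> mv" where "delta p = (\<lambda>q. if q = p then 1 else 0)"

lemma mx: "Lx t (delta (i,j,l,False,e2,e3)) = (\<lambda>q. P t (i - l) * delta (i,j,l,True,e2,e3) q)"
proof
  fix q show "Lx t (delta (i,j,l,False,e2,e3)) q = P t (i - l) * delta (i,j,l,True,e2,e3) q"
  proof (cases q)
    case (fields i' j' l' e1' e2' e3')
    then show ?thesis by (cases e1') (auto simp: delta_def)
  qed
qed

lemma my: "Ly t (delta (i,j,l,False,False,e3)) = (\<lambda>q. P t (j - i) * delta (i,j,l,False,True,e3) q)"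
proof
  fix q show "Ly t (delta (i,j,l,False,False,e3)) q = P t (j - i) * delta (i,j,l,False,True,e3) q"
  proof (cases q)
    case (fields i' j' l' e1' e2' e3')
    then show ?thesis by (cases e1'; cases e2') (auto simp: delta_def)
  qed
qed

lemma mz: "Lz t (delta (i,j,l,False,False,False)) = (\<lambda>q. P t (l - j) * delta (i,j,l,False,False,True) q)"
proof
  fix q show "Lz t (delta (i,j,l,False,False,False)) q = P t (l - j) * delta (i,j,l,False,False,True) q"
  proof (cases q)
    case (fields i' j' l' e1' e2' e3')
    then show ?thesis by (cases e1'; cases e2'; cases e3') (auto simp: delta_def)
  qed
qed

lemma P0: "P t 0 = 1" by (simp add: P_def)

lemma ma: assumes t: "t \<noteq> 0"
  shows "(\<lambda>q. Lx t (Ly t (delta (i,j,l,False,False,False))) q + P t 1 * Ly t (Lx t (delta (i,j,l,False,False,False))) q)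
     = delta (i+1,j,l,False,False,False)"
proof
  fix q show "Lx t (Ly t (delta (i,j,l,False,False,False))) q + P t 1 * Ly t (Lx t (delta (i,j,l,False,False,False))) q
     = delta (i+1,j,l,False,False,False) q"
  proof (cases q)
    case (fields i' j' l' e1' e2' e3')
    then show ?thesis using t
      by (cases e1'; cases e2'; cases e3') (auto simp: delta_def P_mult P_mult' P0 algebra_simps)
  qed
qed

lemma mb: assumes t: "t \<noteq> 0"
  shows "(\<lambda>q. Ly t (Lz t (delta (i,j,l,False,False,False))) q + P t 1 * Lz t (Ly t (delta (i,j,l,False,False,False))) q)
     = (\<lambda>q. P t (-i) * delta (i,j+1,l,False,False,False) q)"
proof
  fix q show "Ly t (Lz t (delta (i,j,l,False,False,False))) q + P t 1 * Lz t (Ly t (delta (i,j,l,False,False,False))) q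
     = P t (-i) * delta (i,j+1,l,False,False,False) q"
  proof (cases q)
    case (fields i' j' l' e1' e2' e3')
    then show ?thesis using t
      by (cases e1'; cases e2'; cases e3') (auto simp: delta_def P_mult P_mult' P0 algebra_simps)
  qed
qed

lemma mc: assumes t: "t \<noteq> 0"
  shows "(\<lambda>q. Lz t (Lx t (delta (i,j,l,False,False,False))) q + P t 1 * Lx t (Lz t (delta (i,j,l,False,False,False))) q)
     = (\<lambda>q. P t (i - j) * delta (i,j,l+1,False,False,False) q)"
proof
  fix q show "Lz t (Lx t (delta (i,j,l,False,False,False))) q + P t 1 * Lx t (Lz t (delta (i,j,l,False,False,False))) q
     = P t (i - j) * delta (i,j,l+1,False,False,False) q"
  proof (cases q)
    case (fields i' j' l' e1' e2' e3')
    then show ?thesis using t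
      by (cases e1'; cases e2'; cases e3') (auto simp: delta_def P_mult P_mult' P0 algebra_simps)
  qed
qed


context TT begin

lemma Op2: "Op t [a,b] m = Lop t a (Lop t b m)" by simp
lemma Op3: "Op t [a,b,c] m = Lop t a (Lop t b (Lop t c m))" by simp
lemma Lop012: "Lop t 0 = Lx t" "Lop t (Suc 0) = Ly t" "Lop t 2 = Lz t"
  by (simp_all add: Lop_def)

lemma Psi_r1: "Psi t (r1 t) m = (\<lambda>q. 0)"
proof
  fix q
  have "Psi t (r1 t) m q = Lz t (Lx t (Ly t m)) q - Ly t (Lz t (Lx t m)) q + P t 1 * Lx t (Lz t (Ly t m)) q - P t 1 * Ly t (Lx t (Lz t m)) q"
    unfolding r1_def by (simp add: Psi_add Psi_diff Psi_scale Psi_mon Lop012 P_one)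
  also have "\<dots> = 0" by (rule rel1[OF t0])
  finally show "Psi t (r1 t) m q = 0" .
qed

lemma Psi_r2: "Psi t (r2 t) m = (\<lambda>q. 0)"
proof
  fix q
  have "Psi t (r2 t) m q = - P t 1 * Lz t (Ly t (Lx t m)) q + P t 1 * Lx t (Lz t (Ly t m)) q - Ly t (Lz t (Lx t m)) q + Lx t (Ly t (Lz t m)) q"
    unfolding r2_def by (simp add: Psi_add Psi_diff Psi_scale Psi_mon Lop012 P_one)
  also have "\<dots> = 0" by (rule rel2[OF t0])
  finally show "Psi t (r2 t) m q = 0" .
qed

lemma r_poly: "r1 t \<in> ncpoly" "r2 t \<in> ncpoly" by (simp_all add: r1_def r2_def)

lemma Psi_rels: "g \<in> T_rels \<omega> t \<Longrightarrow> Psi t g m = (\<lambda>q. 0)"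
proof -
  assume g: "g \<in> T_rels \<omega> t"
  have sq: "Psi t (nc_mon [c,c]) m = (\<lambda>q. 0)" if "c \<in> {0,1,2}" for c
    using that Lx_xx[of t] Ly_yy[OF t0] Lz_zz[OF t0]
    by (auto simp: Psi_mon Lop012 fun_eq_iff)
  have v1: "Psi t (v1 \<omega> t) m = (\<lambda>q. 0)"
    unfolding v1_eq[OF w2] using r_poly by (simp add: Psi_add Psi_scale Psi_r1 Psi_r2)
  have v2: "Psi t (v2 \<omega> t) m = (\<lambda>q. 0)"
    unfolding v2_eq[OF w2] using r_poly by (simp add: Psi_add Psi_scale Psi_r1 Psi_r2)
  show ?thesis using g sq[of 0] sq[of 1] sq[of 2] v1 v2 by (auto simp: T_rels_def nc_mon_mult)
qed

lemma Psi_I: "f \<in> I \<Longrightarrow> Psi t f m = (\<lambda>q. 0)"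
proof -
  assume f: "f \<in> I"
  let ?S = "{f. f \<in> ncpoly \<and> (\<forall>m. Psi t f m = (\<lambda>q. 0))}"
  have sub: "ncv.subspace ?S"
    unfolding ncv.subspace_def
  proof (intro conjI ballI allI)
    show "0 \<in> ?S" by (simp add: Psi_def supp_def)
  next
    fix x y assume "x \<in> ?S" "y \<in> ?S"
    then show "x + y \<in> ?S" by (simp add: Psi_add)
  next
    fix c x assume "x \<in> ?S"
    then show "c *: x \<in> ?S" by (simp add: Psi_scale)
  qed
  have gen: "{nc_mult (nc_mult a g) b | a g b. a \<in> ncpoly \<and> g \<in> T_rels \<omega> t \<and> b \<in> ncpoly} \<subseteq> ?S"
  proof
    fix x assume "x \<in> {nc_mult (nc_mult a g) b | a g b. a \<in> ncpoly \<and> g \<in> T_rels \<omega> t \<and> b \<in> ncpoly}"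
    then obtain a g b where x: "x = a \<odot> g \<odot> b" "a \<in> ncpoly" "g \<in> T_rels \<omega> t" "b \<in> ncpoly" by blast
    have gp: "g \<in> ncpoly" using x(3) T_rels_poly by blast
    have "Psi t x m = (\<lambda>q. 0)" for m
      using x gp by (simp add: Psi_mult Psi_rels Psi_op_zero)
    then show "x \<in> ?S" using x gp by simp
  qed
  show ?thesis using ncv.span_minimal[OF gen sub] f unfolding nc_ideal_def by blast
qed

lemma Psi_al: "Psi t al (delta (i,j,l,False,False,False)) = delta (i+1,j,l,False,False,False)"
  unfolding al_mon using ma[OF t0, of i j l] by (simp add: Psi_diff Psi_scale Psi_mon Lop012 P_one)

lemma Psi_be: "Psi t be (delta (i,j,l,False,False,False)) = (\<lambda>q. P t (-i) * delta (i,j+1,l,False,False,False) q)"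
  unfolding be_mon using mb[OF t0, of i j l] by (simp add: Psi_diff Psi_scale Psi_mon Lop012 P_one)

lemma Psi_ga: "Psi t ga (delta (i,j,l,False,False,False)) = (\<lambda>q. P t (i - j) * delta (i,j,l+1,False,False,False) q)"
  unfolding ga_mon using mc[OF t0, of i j l] by (simp add: Psi_diff Psi_scale Psi_mon Lop012 P_one)

end


context TT begin

lemma Lx_sc: "Lx t (\<lambda>q. a * f q) = (\<lambda>q. a * Lx t f q)" using Lop_scale[of t 0 a f] by (simp add: Lop012)
lemma Ly_sc: "Ly t (\<lambda>q. a * f q) = (\<lambda>q. a * Ly t f q)" using Lop_scale[of t 1 a f] by (simp add: Lop012)
lemma Lz_sc: "Lz t (\<lambda>q. a * f q) = (\<lambda>q. a * Lz t f q)" using Lop_scale[of t 2 a f] by (simp add: Lop012)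

lemma pa: "Psi t (npow al n) (delta (i,j,l,False,False,False)) = delta (i + int n,j,l,False,False,False)"
proof (induction n)
  case 0 then show ?case by (simp add: Psi_mon)
next
  case (Suc n)
  then show ?case by (simp add: Psi_mult Psi_al, simp add: algebra_simps)
qed

lemma pb: "\<exists>c. c \<noteq> 0 \<and> Psi t (npow be n) (delta (i,j,l,False,False,False)) = (\<lambda>q. c * delta (i, j + int n,l,False,False,False) q)"
proof (induction n)
  case 0 then show ?case by (auto simp: Psi_mon intro!: exI[of _ 1])
next
  case (Suc n)
  then obtain c where c: "c \<noteq> 0" "Psi t (npow be n) (delta (i,j,l,False,False,False)) = (\<lambda>q. c * delta (i, j + int n,l,False,False,False) q)" by blast
  have "Psi t (npow be (Suc n)) (delta (i,j,l,False,False,False)) = (\<lambda>q. c * (P t (-i) * delta (i, j + int n + 1,l,False,False,False) q))"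
    using c by (simp add: Psi_mult Psi_op_scale Psi_be)
  moreover have "c * P t (-i) \<noteq> 0" using c P_nz[OF t0] by simp
  ultimately show ?case by (intro exI[of _ "c * P t (-i)"]) (auto simp: ac_simps)
qed

lemma pc: "\<exists>c. c \<noteq> 0 \<and> Psi t (npow ga n) (delta (i,j,l,False,False,False)) = (\<lambda>q. c * delta (i, j, l + int n,False,False,False) q)"
proof (induction n)
  case 0 then show ?case by (auto simp: Psi_mon intro!: exI[of _ 1])
next
  case (Suc n)
  then obtain c where c: "c \<noteq> 0" "Psi t (npow ga n) (delta (i,j,l,False,False,False)) = (\<lambda>q. c * delta (i, j, l + int n,False,False,False) q)" by blast
  have "Psi t (npow ga (Suc n)) (delta (i,j,l,False,False,False)) = (\<lambda>q. c * (P t (i - j) * delta (i, j, l + int n + 1,False,False,False) q))"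
    using c by (simp add: Psi_mult Psi_op_scale Psi_ga)
  moreover have "c * P t (i - j) \<noteq> 0" using c P_nz[OF t0] by simp
  ultimately show ?case by (intro exI[of _ "c * P t (i - j)"]) (auto simp: ac_simps)
qed

lemma ex0: "\<exists>c::complex. c \<noteq> 0 \<and> (f::mv) = (\<lambda>q. c * f q)" by (intro exI[of _ 1]) simp
lemma ex1: "(a::complex) \<noteq> 0 \<Longrightarrow> \<exists>c. c \<noteq> 0 \<and> (\<lambda>q. a * (f::mv) q) = (\<lambda>q. c * f q)" by blast
lemma ex2: "(a::complex) \<noteq> 0 \<Longrightarrow> b \<noteq> 0 \<Longrightarrow> \<exists>c. c \<noteq> 0 \<and> (\<lambda>q. a * (b * (f::mv) q)) = (\<lambda>q. c * f q)"
  by (intro exI[of _ "a * b"]) (simp add: mult.assoc)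
lemma ex3: "(a::complex) \<noteq> 0 \<Longrightarrow> b \<noteq> 0 \<Longrightarrow> d \<noteq> 0 \<Longrightarrow> \<exists>c. c \<noteq> 0 \<and> (\<lambda>q. a * (b * (d * (f::mv) q))) = (\<lambda>q. c * f q)"
  by (intro exI[of _ "a * b * d"]) (simp add: mult.assoc)

lemma pm: "\<exists>c. c \<noteq> 0 \<and> Psi t (Mono e1 e2 e3) (delta (i,j,l,False,False,False)) = (\<lambda>q. c * delta (i,j,l,e1,e2,e3) q)"
proof -
  have nz: "P t n \<noteq> 0" for n using P_nz[OF t0] .
  show ?thesis
    by (cases e1; cases e2; cases e3)
       (simp_all add: Psi_mon Lop012 mx my mz Lx_sc Ly_sc Lz_sc, (intro ex0 ex1 ex2 ex3 nz)+)
qed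

definition LB where "LB i j l e1 e2 e3 = Mono e1 e2 e3 \<odot> (npow ga l \<odot> (npow be j \<odot> npow al i))"

lemma LB_poly: "LB i j l e1 e2 e3 \<in> ncpoly" by (simp add: LB_def)

lemma LB_psi: "\<exists>c. c \<noteq> 0 \<and> Psi t (LB i j l e1 e2 e3) (delta (0,0,0,False,False,False)) = (\<lambda>q. c * delta (int i, int j, int l, e1, e2, e3) q)"
proof -
  have a: "Psi t (npow al i) (delta (0,0,0,False,False,False)) = delta (int i,0,0,False,False,False)"
    using pa[of i 0 0 0] by simp
  obtain cb where b: "cb \<noteq> 0" "Psi t (npow be j) (delta (int i,0,0,False,False,False)) = (\<lambda>q. cb * delta (int i, int j,0,False,False,False) q)"
    using pb[of j "int i" 0 0] by auto
  obtain cc where c: "cc \<noteq> 0" "Psi t (npow ga l) (delta (int i,int j,0,False,False,False)) = (\<lambda>q. cc * delta (int i, int j,int l,False,False,False) q)"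
    using pc[of l "int i" "int j" 0] by auto
  obtain cm where m: "cm \<noteq> 0" "Psi t (Mono e1 e2 e3) (delta (int i,int j,int l,False,False,False)) = (\<lambda>q. cm * delta (int i, int j,int l,e1,e2,e3) q)"
    using pm by blast
  have "Psi t (LB i j l e1 e2 e3) (delta (0,0,0,False,False,False)) = (\<lambda>q. cb * (cc * (cm * delta (int i, int j, int l, e1, e2, e3) q)))"
    unfolding LB_def by (simp add: Psi_mult a b c m Psi_op_scale)
  moreover have "cb * (cc * cm) \<noteq> 0" using b c m by simp
  ultimately show ?thesis by (intro exI[of _ "cb * (cc * cm)"]) (simp add: mult.assoc)
qed

lemma LB_deg: "LB i j l e1 e2 e3 \<in> ncpoly_deg (bits e1 e2 e3 + 2*(i+j+l))"
proof -
  have "LB i j l e1 e2 e3 \<in> ncpoly_deg (bits e1 e2 e3 + (2*l + (2*j + 2*i)))"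
    unfolding LB_def
    using Mono_deg npow_deg[OF al_deg, of i] npow_deg[OF be_deg, of j] npow_deg[OF ga_deg, of l]
    by (intro deg_mult) (auto simp: mult.commute)
  then show ?thesis by (simp add: algebra_simps)
qed

end


lemma gauss2: "2 * (\<Sum>i=0..n. i + 1) = (n+1)*(n+2::nat)"
  by (induction n) (auto simp: algebra_simps)

lemma fps_cube: "Abs_fps (\<lambda>k. of_nat ((k+1)*(k+2) div 2) :: complex) = 1 / (1 - fps_X) ^ 3"
proof -
  have z: "fps_nth ((1 - fps_X) ^ 3 :: complex fps) 0 \<noteq> 0" by simp
  have "1 / (1 - fps_X) ^ 3 = (1 :: complex fps) * inverse ((1 - fps_X) ^ 3)"
    by (rule fps_divide_unit[OF z])
  also have "(1 :: complex fps) * inverse ((1 - fps_X) ^ 3) = inverse ((1 - fps_X)^2 * (1 - (fps_X :: complex fps)))"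
    by (simp add: power2_eq_square power3_eq_cube)
  also have "\<dots> = Abs_fps (\<lambda>n. of_nat (n+1)) * Abs_fps (\<lambda>n. 1)"
    by (simp add: fps_inverse_mult fps_one_over_one_minus_fps_X_squared fps_inverse_one_minus_fps_X)
  finally have e: "1 / (1 - fps_X) ^ 3 = Abs_fps (\<lambda>n. of_nat (n+1)) * (Abs_fps (\<lambda>n. 1) :: complex fps)" by simp
  have "fps_nth (Abs_fps (\<lambda>n. of_nat (n+1)) * (Abs_fps (\<lambda>n. 1) :: complex fps)) k = of_nat ((k+1)*(k+2) div 2)" for k
  proof -
    have "fps_nth (Abs_fps (\<lambda>n. of_nat (n+1)) * (Abs_fps (\<lambda>n. 1) :: complex fps)) k = (\<Sum>i=0..k. of_nat (i+1))"
      by (simp add: fps_mult_nth)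
    also have "\<dots> = of_nat (\<Sum>i=0..k. i + 1)" by simp
    also have "(\<Sum>i=0..k. i + 1) = (k+1)*(k+2) div 2" using gauss2[of k] by simp
    finally show ?thesis .
  qed
  then show ?thesis using e by (simp add: fps_eq_iff)
qed

lemma Psi_zero: "Psi t 0 m = (\<lambda>q. 0)"
  apply (unfold Psi_def)
  apply (rule ext)
  apply (simp add: supp_def)
  done

lemma Psi_zero': "Psi t (\<lambda>a. 0) m = (\<lambda>q. 0)"
  using Psi_zero[of t m] by (simp add: zero_fun_def)

lemma Psi_lin_sum:
  assumes "finite A" "A \<subseteq> ncpoly"
  shows "Psi t (\<Sum>x\<in>A. f x *: x) m = (\<lambda>q. \<Sum>x\<in>A. f x * Psi t x m q)"
  using assms
proof (induction A rule: finite_induct)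
  case empty then show ?case by (simp add: Psi_zero Psi_zero')
next
  case (insert x F)
  have sp: "(\<Sum>x\<in>F. f x *: x) \<in> ncpoly" using insert by (intro ncpoly_sum ncpoly_scale) auto
  have xp: "f x *: x \<in> ncpoly" using insert by (intro ncpoly_scale) auto
  have xp': "x \<in> ncpoly" using insert by auto
  have "Psi t (\<Sum>x\<in>insert x F. f x *: x) m = Psi t (f x *: x + (\<Sum>x\<in>F. f x *: x)) m"
    by (simp only: sum.insert[OF insert.hyps])
  also have "\<dots> = (\<lambda>q. Psi t (f x *: x) m q + Psi t (\<Sum>x\<in>F. f x *: x) m q)"
    by (rule Psi_add[OF xp sp])
  also have "\<dots> = (\<lambda>q. f x * Psi t x m q + (\<Sum>x\<in>F. f x * Psi t x m q))"
    using insert Psi_scale[OF xp'] by simp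
  also have "\<dots> = (\<lambda>q. \<Sum>x\<in>insert x F. f x * Psi t x m q)"
    using insert.hyps by simp
  finally show ?case .
qed

context TT begin

definition LBf where "LBf = (\<lambda>(a,b,c). LB (a div 2) (b div 2) (c div 2) (odd a) (odd b) (odd c))"
definition ix :: "nat \<times> nat \<times> nat \<Rightarrow> idx" where
  "ix = (\<lambda>(a,b,c). (int (a div 2), int (b div 2), int (c div 2), odd a, odd b, odd c))"

lemma nat_div_odd: "(a::nat) div 2 = b div 2 \<Longrightarrow> odd a = odd b \<Longrightarrow> a = b"
  by (metis div_mult_mod_eq odd_iff_mod_2_eq_one parity_cases)

lemma ix_inj: "ix y1 = ix y2 \<Longrightarrow> y1 = y2"
  by (cases y1; cases y2) (auto simp: ix_def intro: nat_div_odd)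

abbreviation Phi where "Phi f \<equiv> Psi t f (delta (0,0,0,False,False,False))"

lemma LBf_phi: "\<exists>c. c \<noteq> 0 \<and> Phi (LBf y) = (\<lambda>q. c * delta (ix y) q)"
  by (cases y) (simp add: LBf_def ix_def LB_psi)

lemma LBf_deg: "y \<in> trip k \<Longrightarrow> LBf y \<in> ncpoly_deg k"
proof (cases y)
  case (fields a b c)
  assume "y \<in> trip k"
  then have "a + b + c = k" using fields by (simp add: trip_def)
  moreover have "bits (odd a) (odd b) (odd c) + 2*(a div 2 + b div 2 + c div 2) = a + b + c"
    by (simp add: bits_def) presburger
  ultimately show ?thesis using LB_deg[of "a div 2" "b div 2" "c div 2" "odd a" "odd b" "odd c"] fields
    by (simp add: LBf_def)
qed

lemma dims: "ncv.dim (ncpoly_deg k) = ncv.dim (I \<inter> ncpoly_deg k) + card (trip k)"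
proof -
  define D where "D = ncpoly_deg k"
  define K where "K = I \<inter> D"
  define W where "W = nc_mon ` words k"
  have fW: "finite W" using finite_words by (simp add: W_def)
  have DW: "D \<subseteq> ncv.span W" using deg_in_span_words by (simp add: D_def W_def)
  obtain Bi where Bi: "Bi \<subseteq> K" "ncv.independent Bi" "K \<subseteq> ncv.span Bi" "card Bi = ncv.dim K"
    using ncv.basis_exists by blast
  have fBi: "finite Bi" using ncv.independent_span_bound[OF fW Bi(2)] Bi(1) DW by (auto simp: K_def)
  obtain Bd where Bd: "Bd \<subseteq> D" "ncv.independent Bd" "D \<subseteq> ncv.span Bd" "card Bd = ncv.dim D"
    using ncv.basis_exists by blast
  have fBd: "finite Bd" using ncv.independent_span_bound[OF fW Bd(2)] Bd(1) DW by auto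
  have "K \<union> SP k \<subseteq> ncv.span (Bi \<union> SP k)"
    using Bi(3) ncv.span_mono[of Bi "Bi \<union> SP k"] ncv.span_superset[of "Bi \<union> SP k"] by blast
  then have "ncv.span (K \<union> SP k) \<subseteq> ncv.span (Bi \<union> SP k)"
    using ncv.span_minimal ncv.subspace_span by blast
  then have "D \<subseteq> ncv.span (Bi \<union> SP k)" using upper_span[of k] by (auto simp: D_def K_def)
  then have "ncv.dim D \<le> card (Bi \<union> SP k)" using fBi SP_finite by (intro ncv.dim_le_card) auto
  also have "\<dots> \<le> card Bi + card (SP k)" by (rule card_Un_le)
  also have "\<dots> \<le> ncv.dim K + card (trip k)" using Bi(4) SP_card by simp
  finally have up: "ncv.dim D \<le> ncv.dim K + card (trip k)" .
  obtain cf where cf: "\<And>y. cf y \<noteq> 0" "\<And>y. Phi (LBf y) = (\<lambda>q. cf y * delta (ix y) q)"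
    using LBf_phi by metis
  have dix: "delta (ix y) (ix y0) = (if y0 = y then 1 else 0)" for y y0
    using ix_inj by (auto simp: delta_def)
  have injL: "inj_on LBf (trip k)"
  proof (rule inj_onI)
    fix y1 y2 assume "LBf y1 = LBf y2"
    then have "cf y1 * delta (ix y1) (ix y1) = cf y2 * delta (ix y2) (ix y1)"
      using cf(2)[of y1] cf(2)[of y2] by (metis)
    then show "y1 = y2" using cf(1)[of y1] by (auto simp: dix split: if_splits)
  qed
  define LBS where "LBS = LBf ` trip k"
  have fLBS: "finite LBS" using finite_trip by (simp add: LBS_def)
  have LBS_D: "LBS \<subseteq> D" using LBf_deg by (auto simp: LBS_def D_def)
  have Bi_D: "Bi \<subseteq> D" using Bi(1) by (simp add: K_def)
  have phiBi: "Phi x = (\<lambda>q. 0)" if "x \<in> Bi" for x using that Bi(1) Psi_I by (auto simp: K_def)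
  have disj: "Bi \<inter> LBS = {}"
  proof (rule ccontr)
    assume "Bi \<inter> LBS \<noteq> {}"
    then obtain x y where "x \<in> Bi" "x = LBf y" by (auto simp: LBS_def)
    then have "cf y * delta (ix y) (ix y) = 0" using phiBi cf(2)[of y] by (metis)
    then show False using cf(1)[of y] by (simp add: delta_def)
  qed
  have Apoly: "Bi \<union> LBS \<subseteq> ncpoly" using Bi_D LBS_D by (auto simp: D_def deg_iff)
  have indep: "ncv.independent (Bi \<union> LBS)"
  proof (rule ncv.independent_if_scalars_zero)
    show "finite (Bi \<union> LBS)" using fBi fLBS by simp
  next
    fix f x assume sum0: "(\<Sum>x\<in>Bi \<union> LBS. f x *: x) = 0" and x: "x \<in> Bi \<union> LBS"
    have "Psi t (\<Sum>x\<in>Bi \<union> LBS. f x *: x) (delta (0,0,0,False,False,False)) = (\<lambda>q. \<Sum>x\<in>Bi \<union> LBS. f x * Phi x q)"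
      using fBi fLBS Apoly by (intro Psi_lin_sum) auto
    then have s1: "(\<Sum>x\<in>Bi \<union> LBS. f x * Phi x q) = 0" for q
      using sum0 Psi_zero by (metis)
    have s2: "(\<Sum>x\<in>LBS. f x * Phi x q) = 0" for q
    proof -
      have "(\<Sum>x\<in>Bi \<union> LBS. f x * Phi x q) = (\<Sum>x\<in>Bi. f x * Phi x q) + (\<Sum>x\<in>LBS. f x * Phi x q)"
        using fBi fLBS disj by (rule sum.union_disjoint)
      moreover have "(\<Sum>x\<in>Bi. f x * Phi x q) = 0" using phiBi by simp
      ultimately show ?thesis using s1[of q] by simp
    qed
    have zL: "f x = 0" if xl: "x \<in> LBS" for x
    proof -
      obtain y0 where y0: "y0 \<in> trip k" "x = LBf y0" using xl by (auto simp: LBS_def)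
      have "(\<Sum>x\<in>LBS. f x * Phi x (ix y0)) = (\<Sum>y\<in>trip k. f (LBf y) * Phi (LBf y) (ix y0))"
        unfolding LBS_def by (rule sum.reindex[OF injL, unfolded comp_def])
      also have "\<dots> = (\<Sum>y\<in>trip k. if y0 = y then f (LBf y) * cf y else 0)"
        by (intro sum.cong refl) (simp add: cf(2) dix)
      also have "\<dots> = f (LBf y0) * cf y0" using y0(1) finite_trip by (simp add: sum.delta)
      finally have "f (LBf y0) * cf y0 = 0" using s2 by simp
      then show ?thesis using cf(1)[of y0] y0(2) by simp
    qed
    have "(\<Sum>x\<in>Bi \<union> LBS. f x *: x) = (\<Sum>x\<in>Bi. f x *: x) + (\<Sum>x\<in>LBS. f x *: x)"
      using fBi fLBS disj by (rule sum.union_disjoint)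
    moreover have "(\<Sum>x\<in>LBS. f x *: x) = 0" using zL by (simp add: nc_scale_zero)
    ultimately have "(\<Sum>x\<in>Bi. f x *: x) = 0" using sum0 by simp
    then have zB: "f x = 0" if "x \<in> Bi" for x using ncv.independentD[OF Bi(2) fBi subset_refl] that by blast
    show "f x = 0" using x zB zL by blast
  qed
  have "card (Bi \<union> LBS) \<le> card Bd"
    using ncv.independent_span_bound[OF fBd indep] Bi_D LBS_D Bd(3) by auto
  moreover have "card (Bi \<union> LBS) = card Bi + card (trip k)"
    using card_Un_disjoint[OF fBi fLBS disj] card_image[OF injL] by (simp add: LBS_def)
  ultimately have low: "ncv.dim K + card (trip k) \<le> ncv.dim D" using Bi(4) Bd(4) by simp
  show ?thesis using up low by (simp add: D_def K_def)
qed

lemma quot_dim_eq: "quot_dim (T_rels \<omega> t) k = (k+1)*(k+2) div 2"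
  unfolding quot_dim_def using dims[of k] card_trip[of k] by simp

end

theorem mainTheorem1:
  fixes \<omega> t :: complex
  assumes "\<omega> ^ 3 = 1" and "\<omega> \<noteq> 1"
    and "t \<noteq> 0"
  shows "hilbert_series (T_rels \<omega> t) = 1 / (1 - fps_X) ^ 3"
proof -
  interpret TT \<omega> t using assms by unfold_locales
  have "hilbert_series (T_rels \<omega> t) = Abs_fps (\<lambda>k. of_nat ((k+1)*(k+2) div 2))"
    unfolding hilbert_series_def by (simp add: quot_dim_eq)
  then show ?thesis using fps_cube by simp
qed


end
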